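(* Let $G=\langle a,b,c\mid a^2=b^2=c^2=(ab)^3=(bc)^3=(ca)^3=1\rangle$ act on the Euclidean plane $\mathbf E^2$ as the reflection group of the tiling by equilateral triangles, and give $\mathbf E^2$ the structure of a space with walls whose walls are the lines of this tiling (each line determining the two open-or-closed half-planes it bounds, chosen as a complementary pair). Then the associated CAT(0) cube complex $X$ is isomorphic to $\mathbf R^3$ with its standard cubulation (vertex set $\mathbf Z^3$); the induced action of $G$ on $X$ is proper, preserves a plane perpendicular to $(1,1,1)$ on which it acts cocompactly, but is not cocompact on $X$.
   Context: A space with walls is a set $Y$ with a non-empty collection $\mathcal H\subset\mathcal P(Y)$ of non-empty subsets closed under complement, such that for any $p,q\in Y$ only finitely many $h\in\mathcal H$ contain $p$ but not $q$. Walls: $\{h,h^c\}$; $W$ the set of walls; walls cross if all four intersections of their half-spaces are non-empty. The associated cube complex $X$: vertices are the admissible sections $\sigma:W\to\mathcal H$ ($\sigma(\overline h)\in\overline h$ and $\sigma(\overline h)\not\subseteq\sigma(\overline k)^c$ for all walls $\overline h,\overline k$) lying in the connected component, of the graph joining sections differing on exactly one wall, which contains $\sigma_p$ ($\sigma_p(\overline h)$ = the half-space of $\overline h$ containing $p$); a unit $k$-cube is attached along the 1-skeleton-of-a-$k$-cube spanned by each vertex together with $k$ incident edges whose labelling walls pairwise cross. $G$ acts on sections by $(g\sigma)(\overline h)=g(\sigma(g^{-1}\overline h))$. *)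

theory Defs
  imports "HOL-Analysis.Analysis"
begin

text \<open>A space with walls on the whole type 'a: H is the set of half-spaces
 (closed under complement in UNIV).\<close>

definition walls :: "'a set set \<Rightarrow> 'a set set set" where
  "walls H = {{h, - h} | h. h \<in> H}"

definition is_section :: "'a set set \<Rightarrow> ('a set set \<Rightarrow> 'a set) \<Rightarrow> bool" where
  "is_section H \<sigma> \<longleftrightarrow> (\<forall>w\<in>walls H. \<sigma> w \<in> w) \<and> (\<forall>w. w \<notin> walls H \<longrightarrow> \<sigma> w = {})"

definition admissible :: "'a set set \<Rightarrow> ('a set set \<Rightarrow> 'a set) \<Rightarrow> bool" where
  "admissible H \<sigma> \<longleftrightarrow> is_section H \<sigma> \<and>
     (\<forall>w\<in>walls H. \<forall>k\<in>walls H. \<not> (\<sigma> w \<subseteq> - \<sigma> k))"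

definition sigma_pt :: "'a set set \<Rightarrow> 'a \<Rightarrow> ('a set set \<Rightarrow> 'a set)" where
  "sigma_pt H p = (\<lambda>w. if w \<in> walls H then (THE h. h \<in> w \<and> p \<in> h) else {})"

definition sec_edges :: "'a set set \<Rightarrow> (('a set set \<Rightarrow> 'a set) \<times> ('a set set \<Rightarrow> 'a set)) set" where
  "sec_edges H = {(\<sigma>, \<tau>). admissible H \<sigma> \<and> admissible H \<tau> \<and> (\<exists>!w. \<sigma> w \<noteq> \<tau> w)}"

definition cc_vertices :: "'a set set \<Rightarrow> 'a \<Rightarrow> ('a set set \<Rightarrow> 'a set) set" where
  "cc_vertices H p = {\<tau>. admissible H \<tau> \<and> (sigma_pt H p, \<tau>) \<in> (sec_edges H)\<^sup>*}"

definition crosses :: "'a set set \<Rightarrow> 'a set set \<Rightarrow> bool" where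
  "crosses w k \<longleftrightarrow> (\<forall>h\<in>w. \<forall>h'\<in>k. h \<inter> h' \<noteq> {})"

definition flip :: "('a set set \<Rightarrow> 'a set) \<Rightarrow> 'a set set set \<Rightarrow> ('a set set \<Rightarrow> 'a set)" where
  "flip \<sigma> T = (\<lambda>w. if w \<in> T then - \<sigma> w else \<sigma> w)"

text \<open>Cubes of X, given by their vertex sets: a vertex with finitely many incident edges
 labelled by pairwise crossing walls, spanning the 1-skeleton of a cube.\<close>
definition cc_cubes :: "'a set set \<Rightarrow> 'a \<Rightarrow> ('a set set \<Rightarrow> 'a set) set set" where
  "cc_cubes H p = {{flip \<sigma> T | T. T \<subseteq> W0} | \<sigma> W0.
      \<sigma> \<in> cc_vertices H p \<and> W0 \<subseteq> walls H \<and> finite W0 \<and>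
      (\<forall>w\<in>W0. \<forall>k\<in>W0. w \<noteq> k \<longrightarrow> crosses w k) \<and>
      (\<forall>T. T \<subseteq> W0 \<longrightarrow> flip \<sigma> T \<in> cc_vertices H p)}"

text \<open>Action of a map g on half-spaces: the half-space whose interior is the image of the
 interior (needed since no complementary choice of open/closed half-planes is G-invariant).\<close>
definition hs_img :: "'a::topological_space set set \<Rightarrow> ('a \<Rightarrow> 'a) \<Rightarrow> 'a set \<Rightarrow> 'a set" where
  "hs_img H g h = (THE h'. h' \<in> H \<and> interior h' = g ` interior h)"

definition wall_img :: "'a::topological_space set set \<Rightarrow> ('a \<Rightarrow> 'a) \<Rightarrow> 'a set set \<Rightarrow> 'a set set" where
  "wall_img H g w = hs_img H g ` w"

definition sec_act :: "'a::topological_space set set \<Rightarrow> ('a \<Rightarrow> 'a) \<Rightarrow> ('a set set \<Rightarrow> 'a set) \<Rightarrow> ('a set set \<Rightarrow> 'a set)" where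
  "sec_act H g \<sigma> = (\<lambda>w. if w \<in> walls H then hs_img H g (\<sigma> (wall_img H (inv g) w)) else {})"

definition dot2 :: "real \<times> real \<Rightarrow> real \<times> real \<Rightarrow> real" where
  "dot2 p q = fst p * fst q + snd p * snd q"

definition nrm :: "nat \<Rightarrow> real \<times> real" where
  "nrm i = (if i = 0 then (0, 1) else if i = 1 then (sqrt 3 / 2, 1 / 2) else (sqrt 3 / 2, - 1 / 2))"

text \<open>Lines of the tiling by unit equilateral triangles: dot2 p (nrm i) = k * sqrt 3 / 2.
 Half-spaces: the closed side and the complementary open side.\<close>
definition tri_H :: "(real \<times> real) set set" where
  "tri_H = {{p. dot2 p (nrm i) \<ge> of_int k * (sqrt 3 / 2)} | i k. i < (3::nat)}
         \<union> {{p. dot2 p (nrm i) < of_int k * (sqrt 3 / 2)} | i k. i < (3::nat)}"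

definition refl_line :: "nat \<Rightarrow> int \<Rightarrow> real \<times> real \<Rightarrow> real \<times> real" where
  "refl_line i k p = (let t = dot2 p (nrm i) - of_int k * (sqrt 3 / 2)
                      in (fst p - 2 * t * fst (nrm i), snd p - 2 * t * snd (nrm i)))"

text \<open>Generators a, b, c: reflections in the sides of the triangle (0,0), (1,0), (1/2, sqrt 3/2).\<close>
definition tri_gens :: "(real \<times> real \<Rightarrow> real \<times> real) set" where
  "tri_gens = {refl_line 0 0, refl_line 2 0, refl_line 1 1}"

inductive_set tri_G :: "(real \<times> real \<Rightarrow> real \<times> real) set" where
  tri_G_id: "id \<in> tri_G"
| tri_G_step: "g \<in> tri_G \<Longrightarrow> r \<in> tri_gens \<Longrightarrow> r \<circ> g \<in> tri_G"

definition Z3 :: "(real^3) set" where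
  "Z3 = {x. \<forall>i. x $ i \<in> \<int>}"

definition std_cubes :: "(real^3) set set" where
  "std_cubes = {{v + (\<chi> i. if i \<in> T then 1 else 0) | T. T \<subseteq> S} | v S. v \<in> Z3}"

definition plane111 :: "real \<Rightarrow> (real^3) set" where
  "plane111 c = {x. x \<bullet> vector [1, 1, 1] = c}"

end

theory Submission
  imports Defs
begin

definition F :: "3 \<Rightarrow> real \<times> real \<Rightarrow> real" where
  "F j p = (if j = 1 then 2 * snd p / sqrt 3 else if j = 2 then - fst p - snd p / sqrt 3
            else fst p - snd p / sqrt 3)"

definition Pt :: "real \<Rightarrow> real \<Rightarrow> real \<times> real" where
  "Pt u v = (v + u / 2, u * sqrt 3 / 2)"

lemma F_Pt [simp]: "F 1 (Pt u v) = u" "F 2 (Pt u v) = - u - v" "F 3 (Pt u v) = v"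
  by (auto simp: F_def Pt_def field_simps)

lemma F_sum: "F 1 p + F 2 p + F 3 p = 0"
  by (simp add: F_def)

lemma F_eqI: assumes "F 1 a = F 1 b" "F 3 a = F 3 b" shows "a = b"
proof -
  have "snd a = snd b" using assms(1) by (simp add: F_def)
  moreover then have "fst a = fst b" using assms(2) by (simp add: F_def)
  ultimately show ?thesis by (simp add: prod_eq_iff)
qed

lemma F_pt2:
  assumes "i \<noteq> j" shows "\<exists>p. F i p = \<alpha> \<and> F j p = \<beta>"
proof -
  let ?u = "if i = 1 then \<alpha> else if j = 1 then \<beta> else -\<alpha>-\<beta>"
  let ?v = "if i = 3 then \<alpha> else if j = 3 then \<beta> else -\<alpha>-\<beta>"
  have "i = 1 \<or> i = 2 \<or> i = 3" "j = 1 \<or> j = 2 \<or> j = 3" by (rule exhaust_3)+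
  then have "F i (Pt ?u ?v) = \<alpha> \<and> F j (Pt ?u ?v) = \<beta>" using assms
    by (elim disjE) simp_all
  then show ?thesis by blast
qed

lemma F_pt1: "\<exists>p. F i p = \<alpha>"
proof -
  have "i \<noteq> (if i = 1 then 2 else 1)" by auto
  from F_pt2[OF this] show ?thesis by blast
qed

definition Hi :: "3 \<Rightarrow> int \<Rightarrow> (real \<times> real) set" where
  "Hi j k = (if j = 2 then {p. F j p > of_int k} else {p. F j p \<ge> of_int k})"

definition HS :: "3 \<Rightarrow> int \<Rightarrow> bool \<Rightarrow> (real \<times> real) set" where
  "HS j k b = (if b then Hi j k else - Hi j k)"

definition Wl :: "3 \<Rightarrow> int \<Rightarrow> (real \<times> real) set set" where
  "Wl j k = {HS j k True, HS j k False}"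

definition val :: "int \<Rightarrow> bool \<Rightarrow> real" where
  "val k b = (if b then of_int k + 1 else of_int k - 1)"

lemma mem_HS_val: "F j p = val k b \<Longrightarrow> p \<in> HS j k b"
  by (auto simp: HS_def Hi_def val_def)

lemma mem_HS: "p \<in> HS j k b \<longleftrightarrow> (b \<longleftrightarrow> (if j = 2 then F j p > of_int k else F j p \<ge> of_int k))"
  by (auto simp: HS_def Hi_def)

lemma HS_compl: "- HS j k b = HS j k (\<not> b)"
  by (auto simp: HS_def)

lemma HS_disj: "HS j k b \<inter> HS j' k' b' = {} \<longleftrightarrow>
   (j = j' \<and> ((b \<and> \<not> b' \<and> k' \<le> k) \<or> (\<not> b \<and> b' \<and> k \<le> k')))"
proof
  assume "j = j' \<and> ((b \<and> \<not> b' \<and> k' \<le> k) \<or> (\<not> b \<and> b' \<and> k \<le> k'))"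
  then have h: "j = j'" "(b \<and> \<not> b' \<and> k' \<le> k) \<or> (\<not> b \<and> b' \<and> k \<le> k')" by auto
  have "\<not> (p \<in> HS j k b \<and> p \<in> HS j' k' b')" for p
    using h unfolding mem_HS
    by (cases b; cases b'; cases "j = 2"; simp; linarith)
  then show "HS j k b \<inter> HS j' k' b' = {}" by blast
next
  assume e: "HS j k b \<inter> HS j' k' b' = {}"
  show "j = j' \<and> ((b \<and> \<not> b' \<and> k' \<le> k) \<or> (\<not> b \<and> b' \<and> k \<le> k'))"
  proof (rule ccontr)
    assume nc: "\<not> ?thesis"
    show False
    proof (cases "j = j'")
      case False
      then obtain p where "F j p = val k b" "F j' p = val k' b'" using F_pt2 by blast
      then have "p \<in> HS j k b \<inter> HS j' k' b'" by (simp add: mem_HS_val)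
      then show False using e by blast
    next
      case True
      define v where "v = (if b = b' then (if b then max (of_int k) (of_int k') + 1 else min (of_int k) (of_int k') - 1)
                 else (if b then of_int k + 1/2 else of_int k' + 1/2) :: real)"
      obtain p where p: "F j p = v" using F_pt1 by blast
      have "p \<in> HS j k b \<and> p \<in> HS j' k' b'" using p nc True
        unfolding mem_HS v_def
        by (cases b; cases b'; cases "j = 2"; simp; linarith)
      then show False using e by blast
    qed
  qed
qed


lemma HS_ne: "HS j k b \<noteq> {}"
proof
  assume "HS j k b = {}"
  then have "HS j k b \<inter> HS j k b = {}" by simp
  then show False unfolding HS_disj by simp
qed

lemma HS_inj: "HS j k b = HS j' k' b' \<longleftrightarrow> j = j' \<and> k = k' \<and> b = b'"
proof
  assume e: "HS j k b = HS j' k' b'"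
  have d1: "HS j k b \<inter> HS j k (\<not> b) = {}" by (simp add: HS_disj)
  have d2: "HS j' k' b' \<inter> HS j' k' (\<not> b') = {}" by (simp add: HS_disj)
  from d1 e have "HS j' k' b' \<inter> HS j k (\<not> b) = {}" by simp
  then have a: "j' = j \<and> b = b' \<and> (if b then k \<le> k' else k' \<le> k)" unfolding HS_disj by auto
  from d2 e have "HS j k b \<inter> HS j' k' (\<not> b') = {}" by simp
  then have "j = j' \<and> (if b then k' \<le> k else k \<le> k')" using a unfolding HS_disj by auto
  with a show "j = j' \<and> k = k' \<and> b = b'" by (auto split: if_splits)
qed auto

lemma HS_in_Wl: "HS j k b \<in> Wl j' k' \<longleftrightarrow> j = j' \<and> k = k'"
  by (auto simp: Wl_def HS_inj)

lemma Wl_inj: "Wl j k = Wl j' k' \<longleftrightarrow> j = j' \<and> k = k'"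
proof
  assume "Wl j k = Wl j' k'"
  then have "HS j k True \<in> Wl j' k'" by (metis Wl_def insertI1)
  then show "j = j' \<and> k = k'" by (simp add: HS_in_Wl)
qed auto

lemma crosses_Wl: "crosses (Wl j k) (Wl j' k') \<longleftrightarrow> j \<noteq> j'"
proof
  assume "crosses (Wl j k) (Wl j' k')"
  then have "HS j k True \<inter> HS j' k' False \<noteq> {}" "HS j k False \<inter> HS j' k' True \<noteq> {}"
    by (auto simp: crosses_def Wl_def)
  then show "j \<noteq> j'" unfolding HS_disj by auto
next
  assume "j \<noteq> j'"
  then show "crosses (Wl j k) (Wl j' k')"
    unfolding crosses_def Wl_def using HS_disj by auto
qed

lemma dot_nrm0: "dot2 p (nrm 0) = (sqrt 3 / 2) * F 1 p"
  by (simp add: dot2_def nrm_def F_def)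
lemma dot_nrm1: "dot2 p (nrm 1) = - (sqrt 3 / 2) * F 2 p"
  by (simp add: dot2_def nrm_def F_def field_simps)
lemma dot_nrm2: "dot2 p (nrm 2) = (sqrt 3 / 2) * F 3 p"
  by (simp add: dot2_def nrm_def F_def field_simps)

lemma s3pos: "sqrt 3 / 2 > (0::real)" by simp

lemma cmp1: "of_int k * (sqrt 3/2) \<le> (sqrt 3/2) * x \<longleftrightarrow> of_int k \<le> (x::real)"
  by (metis mult.commute mult_le_cancel_left_pos s3pos)
lemma cmp2: "(sqrt 3/2) * x < of_int k * (sqrt 3/2) \<longleftrightarrow> x < (of_int k::real)"
  by (meson cmp1 not_le)
lemma cmp3: "of_int k * (sqrt 3/2) \<le> - (sqrt 3/2) * x \<longleftrightarrow> x \<le> - (of_int k::real)"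
proof -
  have "- (sqrt 3/2) * x = (sqrt 3/2) * (-x)" by simp
  then show ?thesis using cmp1[of k "-x"] by linarith
qed
lemma cmp4: "- (sqrt 3/2) * x < of_int k * (sqrt 3/2) \<longleftrightarrow> - (of_int k::real) < x"
  by (meson cmp3 not_le)

lemma setA0: "{p. dot2 p (nrm 0) \<ge> of_int k * (sqrt 3 / 2)} = HS 1 k True"
  unfolding dot_nrm0 set_eq_iff mem_HS mem_Collect_eq cmp1 by simp
lemma setB0: "{p. dot2 p (nrm 0) < of_int k * (sqrt 3 / 2)} = HS 1 k False"
  unfolding dot_nrm0 set_eq_iff mem_HS mem_Collect_eq cmp2 by auto
lemma setA1: "{p. dot2 p (nrm 1) \<ge> of_int k * (sqrt 3 / 2)} = HS 2 (-k) False"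
  unfolding dot_nrm1 set_eq_iff mem_HS mem_Collect_eq cmp3 by auto
lemma setB1: "{p. dot2 p (nrm 1) < of_int k * (sqrt 3 / 2)} = HS 2 (-k) True"
  unfolding dot_nrm1 set_eq_iff mem_HS mem_Collect_eq cmp4 by auto
lemma setA2: "{p. dot2 p (nrm 2) \<ge> of_int k * (sqrt 3 / 2)} = HS 3 k True"
  unfolding dot_nrm2 set_eq_iff mem_HS mem_Collect_eq cmp1 by simp
lemma setB2: "{p. dot2 p (nrm 2) < of_int k * (sqrt 3 / 2)} = HS 3 k False"
  unfolding dot_nrm2 set_eq_iff mem_HS mem_Collect_eq cmp2 by auto

lemma tri_H_eq: "tri_H = {HS j k b | j k b. True}"
proof (rule set_eqI, rule iffI)
  fix h assume "h \<in> tri_H"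
  then obtain i k where i: "i < (3::nat)" and
    h: "h = {p. dot2 p (nrm i) \<ge> of_int k * (sqrt 3 / 2)} \<or> h = {p. dot2 p (nrm i) < of_int k * (sqrt 3 / 2)}"
    unfolding tri_H_def by blast
  from i have "i = 0 \<or> i = 1 \<or> i = 2" by auto
  then show "h \<in> {HS j k b | j k b. True}"
  proof (elim disjE)
    assume "i = 0"
    then have "h = HS 1 k True \<or> h = HS 1 k False" using h setA0 setB0 by metis
    then show ?thesis by blast
  next
    assume "i = 1"
    then have "h = HS 2 (-k) False \<or> h = HS 2 (-k) True" using h setA1 setB1 by metis
    then show ?thesis by blast
  next
    assume "i = 2"
    then have "h = HS 3 k True \<or> h = HS 3 k False" using h setA2 setB2 by metis
    then show ?thesis by blast
  qed
next
  fix h assume "h \<in> {HS j k b | j k b. True}"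
  then obtain j k b where h: "h = HS j k b" by blast
  let ?A = "\<lambda>i k. {p. dot2 p (nrm i) \<ge> of_int k * (sqrt 3 / 2)}"
  let ?B = "\<lambda>i k. {p. dot2 p (nrm i) < of_int k * (sqrt 3 / 2)}"
  have A: "?A i k \<in> tri_H" "?B i k \<in> tri_H" if "i < 3" for i k
    unfolding tri_H_def using that by blast+
  have "j = 1 \<or> j = 2 \<or> j = 3" by (rule exhaust_3)
  then show "h \<in> tri_H"
  proof (elim disjE)
    assume j: "j = 1"
    then show ?thesis using A[of 0 k] h setA0 setB0 by (cases b) auto
  next
    assume j: "j = 2"
    then show ?thesis using A[of 1 "-k"] h setA1[of "-k"] setB1[of "-k"] by (cases b) auto
  next
    assume j: "j = 3"
    then show ?thesis using A[of 2 k] h setA2 setB2 by (cases b) auto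
  qed
qed

lemma walls_eq_old: "w \<in> walls tri_H \<longleftrightarrow> (\<exists>j k. w = Wl j k)"
proof
  assume "w \<in> walls tri_H"
  then obtain h where "h \<in> tri_H" "w = {h, - h}" unfolding walls_def by blast
  then obtain j k b where "h = HS j k b" unfolding tri_H_eq by blast
  with \<open>w = {h, - h}\<close> have "w = {HS j k b, HS j k (\<not> b)}" by (simp add: HS_compl)
  then show "\<exists>j k. w = Wl j k" unfolding Wl_def by (cases b) auto
next
  assume "\<exists>j k. w = Wl j k"
  then obtain j k where "w = Wl j k" by blast
  then have "w = {HS j k True, - HS j k True}" by (simp add: Wl_def HS_compl)
  moreover have "HS j k True \<in> tri_H" unfolding tri_H_eq by blast
  ultimately show "w \<in> walls tri_H" unfolding walls_def by blast
qed

lemma walls_eq: "w \<in> walls tri_H \<longleftrightarrow> (\<exists>j k. w = Wl j k)"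
  by (rule walls_eq_old)

lemma wallsE: assumes "w \<in> walls tri_H" obtains j k where "w = Wl j k"
  using assms walls_eq by blast

lemma Wl_walls [simp]: "Wl j k \<in> walls tri_H"
  using walls_eq by blast

definition Psi :: "(3 \<Rightarrow> int) \<Rightarrow> ((real \<times> real) set set \<Rightarrow> (real \<times> real) set)" where
  "Psi z w = (if w \<in> walls tri_H then (THE h. \<exists>j k. w = Wl j k \<and> h = HS j k (k \<le> z j)) else {})"

lemma Psi_Wl [simp]: "Psi z (Wl j k) = HS j k (k \<le> z j)"
proof -
  have "(THE h. \<exists>j' k'. Wl j k = Wl j' k' \<and> h = HS j' k' (k' \<le> z j')) = HS j k (k \<le> z j)"
    by (rule the_equality) (auto simp: Wl_inj)
  then show ?thesis by (simp add: Psi_def)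
qed

lemma Psi_nw: "w \<notin> walls tri_H \<Longrightarrow> Psi z w = {}"
  by (simp add: Psi_def)

lemma sec_ext:
  assumes "\<And>w. w \<notin> walls tri_H \<Longrightarrow> \<sigma> w = {}" "\<And>w. w \<notin> walls tri_H \<Longrightarrow> \<tau> w = {}"
    "\<And>j k. \<sigma> (Wl j k) = \<tau> (Wl j k)"
  shows "\<sigma> = \<tau>"
proof
  fix w show "\<sigma> w = \<tau> w"
  proof (cases "w \<in> walls tri_H")
    case True then obtain j k where "w = Wl j k" using walls_eq by blast
    then show ?thesis using assms(3) by simp
  qed (simp add: assms)
qed

lemma Psi_section: "is_section tri_H (Psi z)"
  unfolding is_section_def
proof (intro conjI ballI allI impI)
  fix w assume "w \<in> walls tri_H"
  then obtain j k where "w = Wl j k" using walls_eq by blast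
  then show "Psi z w \<in> w" by (simp add: HS_in_Wl)
qed (simp add: Psi_nw)

lemma Psi_adm: "admissible tri_H (Psi z)"
  unfolding admissible_def
proof (rule conjI[OF Psi_section], intro ballI)
  fix w w' assume ww: "w \<in> walls tri_H" "w' \<in> walls tri_H"
  obtain j k where w1: "w = Wl j k" using ww(1) walls_eq by blast
  obtain j' k' where w2: "w' = Wl j' k'" using ww(2) walls_eq by blast
  note w = w1 w2
  have "\<not> ((k \<le> z j \<and> \<not> k' \<le> z j \<and> k' \<le> k) \<or> (\<not> k \<le> z j \<and> k' \<le> z j \<and> k \<le> k'))"
    by linarith
  then have "HS j k (k \<le> z j) \<inter> HS j' k' (k' \<le> z j') \<noteq> {}"
    unfolding HS_disj by blast
  then show "\<not> Psi z w \<subseteq> - Psi z w'" using w by (simp add: disjoint_eq_subset_Compl)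
qed

definition zp :: "real \<times> real \<Rightarrow> 3 \<Rightarrow> int" where
  "zp p j = (if j = 2 then \<lceil>F j p\<rceil> - 1 else \<lfloor>F j p\<rfloor>)"

lemma sigma_pt_eq: "sigma_pt tri_H p = Psi (zp p)"
proof (rule sec_ext)
  fix w assume "w \<notin> walls tri_H" then show "sigma_pt tri_H p w = {}" by (simp add: sigma_pt_def)
next
  fix w assume "w \<notin> walls tri_H" then show "Psi (zp p) w = {}" by (simp add: Psi_nw)
next
  fix j k
  have m: "p \<in> HS j k True \<longleftrightarrow> k \<le> zp p j"
    by (simp add: mem_HS zp_def le_floor_iff less_ceiling_iff)
  have "(THE h. h \<in> Wl j k \<and> p \<in> h) = HS j k (p \<in> HS j k True)"
  proof (rule the_equality)
    show "HS j k (p \<in> HS j k True) \<in> Wl j k \<and> p \<in> HS j k (p \<in> HS j k True)"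
      by (auto simp: Wl_def HS_def)
  next
    fix h assume "h \<in> Wl j k \<and> p \<in> h"
    then show "h = HS j k (p \<in> HS j k True)" by (auto simp: Wl_def HS_def)
  qed
  then show "sigma_pt tri_H p (Wl j k) = Psi (zp p) (Wl j k)"
    using m by (simp add: sigma_pt_def)
qed

abbreviation "E \<equiv> sec_edges tri_H"

lemma E_sym: "(a, b) \<in> E \<Longrightarrow> (b, a) \<in> E"
  unfolding sec_edges_def by (auto simp: eq_commute)

lemma Psi_diff: "Psi z (Wl j k) \<noteq> Psi z' (Wl j k) \<longleftrightarrow> (k \<le> z j) \<noteq> (k \<le> z' j)"
  by (simp add: HS_inj)

lemma edge_up: "(Psi z, Psi (z(j := z j + 1))) \<in> E"
proof -
  let ?z = "z(j := z j + 1)"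
  have "\<exists>!w. Psi z w \<noteq> Psi ?z w"
  proof (rule ex1I[of _ "Wl j (z j + 1)"])
    show "Psi z (Wl j (z j + 1)) \<noteq> Psi ?z (Wl j (z j + 1))" unfolding Psi_diff by simp
  next
    fix w assume w: "Psi z w \<noteq> Psi ?z w"
    then have "w \<in> walls tri_H" using Psi_nw by metis
    then obtain j' k' where w': "w = Wl j' k'" using walls_eq by blast
    then have "(k' \<le> z j') \<noteq> (k' \<le> ?z j')" using w Psi_diff by metis
    then have "j' = j" "k' = z j + 1" by (auto split: if_splits)
    then show "w = Wl j (z j + 1)" using w' by simp
  qed
  then show ?thesis unfolding sec_edges_def by (simp add: Psi_adm)
qed

lemma reach_coord: "(Psi z, Psi (z(j := m))) \<in> E\<^sup>*"
proof (cases "z j \<le> m")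
  case True
  then show ?thesis
  proof (induction m rule: int_ge_induct)
    case base then show ?case by simp
  next
    case (step i)
    have "(Psi (z(j := i)), Psi (z(j := i + 1))) \<in> E"
      using edge_up[of "z(j := i)" j] by simp
    with step.IH show ?case by (rule rtrancl_into_rtrancl)
  qed
next
  case False
  then have "m \<le> z j" by simp
  then show ?thesis
  proof (induction m rule: int_le_induct)
    case base then show ?case by simp
  next
    case (step i)
    have "(Psi (z(j := i - 1)), Psi (z(j := i))) \<in> E"
      using edge_up[of "z(j := i - 1)" j] by simp
    then have "(Psi (z(j := i)), Psi (z(j := i - 1))) \<in> E" by (rule E_sym)
    with step.IH show ?case by (rule rtrancl_into_rtrancl)
  qed
qed

lemma reach_all: "(Psi z, Psi z') \<in> E\<^sup>*"
proof -
  let ?z1 = "z(1 := z' 1)"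
  let ?z2 = "?z1(2 := z' 2)"
  let ?z3 = "?z2(3 := z' 3)"
  have "?z3 = z'"
  proof
    fix i :: 3 show "?z3 i = z' i" using exhaust_3[of i] by auto
  qed
  have "(Psi z, Psi ?z1) \<in> E\<^sup>*" "(Psi ?z1, Psi ?z2) \<in> E\<^sup>*" "(Psi ?z2, Psi ?z3) \<in> E\<^sup>*"
    by (rule reach_coord)+
  then have "(Psi z, Psi ?z3) \<in> E\<^sup>*" by (meson rtrancl_trans)
  with \<open>?z3 = z'\<close> show ?thesis by simp
qed

lemma adm_inter: "admissible tri_H \<tau> \<Longrightarrow> w \<in> walls tri_H \<Longrightarrow> w' \<in> walls tri_H \<Longrightarrow> \<tau> w \<inter> \<tau> w' \<noteq> {}"
  unfolding admissible_def by blast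

lemma sec_in: "admissible tri_H \<tau> \<Longrightarrow> \<tau> (Wl j k) \<in> Wl j k"
  unfolding admissible_def is_section_def by simp

lemma sec_off: "admissible tri_H \<tau> \<Longrightarrow> w \<notin> walls tri_H \<Longrightarrow> \<tau> w = {}"
  unfolding admissible_def is_section_def by simp

lemma in_Wl_HS: "h \<in> Wl j k \<Longrightarrow> \<exists>b. h = HS j k b"
  unfolding Wl_def by blast

lemma step_classify:
  assumes adm: "admissible tri_H \<tau>" and u: "\<exists>!w. Psi z w \<noteq> \<tau> w"
  shows "\<tau> \<in> range Psi"
proof -
  obtain w0 where w0: "Psi z w0 \<noteq> \<tau> w0" and un: "\<And>w. Psi z w \<noteq> \<tau> w \<Longrightarrow> w = w0"
    using u by blast
  have "w0 \<in> walls tri_H" using w0 Psi_nw sec_off[OF adm] by metis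
  then obtain j k where jk: "w0 = Wl j k" using walls_eq by blast
  obtain b where b: "\<tau> (Wl j k) = HS j k b" using sec_in[OF adm] in_Wl_HS by blast
  have bneq: "b = (\<not> k \<le> z j)" using w0 jk b by (auto simp: HS_inj)
  have oth: "\<tau> (Wl j' k') = HS j' k' (k' \<le> z j')" if "(j', k') \<noteq> (j, k)" for j' k'
  proof -
    have "Wl j' k' \<noteq> w0" using that jk by (simp add: Wl_inj)
    then show ?thesis using un[of "Wl j' k'"] by force
  qed
  have kk: "k = z j \<or> k = z j + 1"
  proof (rule ccontr)
    assume nk: "\<not> ?thesis"
    show False
    proof (cases "k \<le> z j")
      case True
      then have "k < z j" using nk by simp
      then have "\<tau> (Wl j (z j)) = HS j (z j) True" using oth[of j "z j"] by simp
      moreover have "\<tau> (Wl j k) = HS j k False" using b bneq True by simp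
      moreover have "HS j (z j) True \<inter> HS j k False = {}" unfolding HS_disj using True by simp
      ultimately show False using adm_inter[OF adm, of "Wl j (z j)" "Wl j k"] by simp
    next
      case False
      then have "k > z j + 1" using nk by simp
      then have "\<tau> (Wl j (z j + 1)) = HS j (z j + 1) False" using oth[of j "z j + 1"] by simp
      moreover have "\<tau> (Wl j k) = HS j k True" using b bneq False by simp
      moreover have "HS j k True \<inter> HS j (z j + 1) False = {}" unfolding HS_disj using False by simp
      ultimately show False using adm_inter[OF adm, of "Wl j k" "Wl j (z j + 1)"] by simp
    qed
  qed
  define z' where "z' = z(j := (if k = z j then z j - 1 else z j + 1))"
  have "\<tau> = Psi z'"
  proof (rule sec_ext)
    fix w assume "w \<notin> walls tri_H" then show "\<tau> w = {}" by (rule sec_off[OF adm])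
  next
    fix w assume "w \<notin> walls tri_H" then show "Psi z' w = {}" by (rule Psi_nw)
  next
    fix j' k'
    show "\<tau> (Wl j' k') = Psi z' (Wl j' k')"
    proof (cases "(j', k') = (j, k)")
      case True
      then show ?thesis using b bneq kk by (auto simp: z'_def)
    next
      case False
      then have "(k' \<le> z j') = (k' \<le> z' j')" using kk by (auto simp: z'_def)
      then show ?thesis using oth[OF False] by simp
    qed
  qed
  then show ?thesis by blast
qed

lemma V_eq: "cc_vertices tri_H p = range Psi"
proof
  show "cc_vertices tri_H p \<subseteq> range Psi"
  proof
    fix \<tau> assume "\<tau> \<in> cc_vertices tri_H p"
    then have r: "(Psi (zp p), \<tau>) \<in> E\<^sup>*" unfolding cc_vertices_def sigma_pt_eq by blast
    then show "\<tau> \<in> range Psi"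
    proof (induction rule: rtrancl_induct)
      case base then show ?case by simp
    next
      case (step y \<tau>)
      then obtain z where "y = Psi z" by blast
      with step.hyps(2) show ?case unfolding sec_edges_def using step_classify by blast
    qed
  qed
next
  show "range Psi \<subseteq> cc_vertices tri_H p"
    unfolding cc_vertices_def sigma_pt_eq using Psi_adm reach_all by blast
qed

lemma Psi_inj: "Psi z = Psi z' \<longleftrightarrow> z = z'"
proof
  assume e: "Psi z = Psi z'"
  show "z = z'"
  proof
    fix j
    have "Psi z (Wl j (z j)) = Psi z' (Wl j (z j))" "Psi z (Wl j (z' j)) = Psi z' (Wl j (z' j))"
      using e by simp_all
    then have "z j \<le> z' j" "z' j \<le> z j" by (auto simp: HS_inj)
    then show "z j = z' j" by simp
  qed
qed simp


definition toR :: "(3 \<Rightarrow> int) \<Rightarrow> real^3" where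
  "toR z = (\<chi> j. of_int (z j))"

definition phi :: "((real \<times> real) set set \<Rightarrow> (real \<times> real) set) \<Rightarrow> real^3" where
  "phi \<sigma> = toR (THE z. \<sigma> = Psi z)"

lemma phi_Psi [simp]: "phi (Psi z) = toR z"
proof -
  have "(THE z'. Psi z = Psi z') = z" by (rule the_equality) (auto simp: Psi_inj)
  then show ?thesis by (simp add: phi_def)
qed

lemma toR_inj: "toR z = toR z' \<longleftrightarrow> z = z'"
  by (auto simp: toR_def vec_eq_iff)

lemma inj_toR: "inj toR"
  by (rule injI) (simp add: toR_inj)

lemma toR_nth [simp]: "toR z $ j = of_int (z j)"
  by (simp add: toR_def)

lemma Z3_eq: "Z3 = range toR"
proof
  show "Z3 \<subseteq> range toR"
  proof
    fix x assume "x \<in> Z3"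
    then have i: "x $ j \<in> \<int>" for j unfolding Z3_def by blast
    have "x = toR (\<lambda>j. \<lfloor>x $ j\<rfloor>)"
    proof (subst vec_eq_iff, rule allI)
      fix j
      from i[of j] obtain n where "x $ j = of_int n" by (auto elim: Ints_cases)
      then show "x $ j = toR (\<lambda>j. \<lfloor>x $ j\<rfloor>) $ j" by simp
    qed
    then show "x \<in> range toR" by blast
  qed
next
  show "range toR \<subseteq> Z3" unfolding Z3_def by auto
qed

lemma phi_bij: "bij_betw phi (range Psi) Z3"
  unfolding bij_betw_def
proof
  show "inj_on phi (range Psi)"
    by (rule inj_onI) (auto simp: toR_inj)
  show "phi ` range Psi = Z3" unfolding Z3_eq by (auto simp: image_iff)
qed

definition Zbox :: "(3 \<Rightarrow> int) \<Rightarrow> 3 set \<Rightarrow> (3 \<Rightarrow> int) set" where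
  "Zbox v J = {z. \<forall>i. z i = v i \<or> (i \<in> J \<and> z i = v i + 1)}"

lemma std_box: "{toR v + (\<chi> i. if i \<in> T then 1 else 0) | T. T \<subseteq> J} = toR ` Zbox v J"
proof (rule set_eqI, rule iffI)
  fix x assume "x \<in> {toR v + (\<chi> i. if i \<in> T then 1 else 0) | T. T \<subseteq> J}"
  then obtain T where T: "T \<subseteq> J" "x = toR v + (\<chi> i. if i \<in> T then 1 else 0)" by blast
  let ?z = "\<lambda>i. v i + (if i \<in> T then 1 else 0)"
  have "x = toR ?z" using T by (simp add: vec_eq_iff)
  moreover have "?z \<in> Zbox v J" using T by (auto simp: Zbox_def)
  ultimately show "x \<in> toR ` Zbox v J" by blast
next
  fix x assume "x \<in> toR ` Zbox v J"
  then obtain z where z: "z \<in> Zbox v J" "x = toR z" by blast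
  let ?T = "{i. z i = v i + 1}"
  have "?T \<subseteq> J"
  proof
    fix i assume "i \<in> ?T" then have "z i = v i + 1" by simp
    moreover have "z i = v i \<or> (i \<in> J \<and> z i = v i + 1)" using z(1) unfolding Zbox_def by blast
    ultimately show "i \<in> J" by auto
  qed
  moreover have "x = toR v + (\<chi> i. if i \<in> ?T then 1 else 0)"
  proof (subst vec_eq_iff, rule allI)
    fix i
    have "z i = v i \<or> z i = v i + 1" using z by (auto simp: Zbox_def)
    then show "x $ i = (toR v + (\<chi> i. if i \<in> ?T then 1 else 0)) $ i" using z by auto
  qed
  ultimately show "x \<in> {toR v + (\<chi> i. if i \<in> T then 1 else 0) | T. T \<subseteq> J}" by blast
qed

lemma std_cubes_eq: "std_cubes = {toR ` Zbox v J | v J. True}"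
proof (rule set_eqI, rule iffI)
  fix C assume "C \<in> std_cubes"
  then obtain v S where "v \<in> Z3" "C = {v + (\<chi> i. if i \<in> T then 1 else 0) | T. T \<subseteq> S}"
    unfolding std_cubes_def by blast
  then obtain v0 where "C = {toR v0 + (\<chi> i. if i \<in> T then 1 else 0) | T. T \<subseteq> S}"
    unfolding Z3_eq by blast
  then show "C \<in> {toR ` Zbox v J | v J. True}" unfolding std_box by blast
next
  fix C assume "C \<in> {toR ` Zbox v J | v J. True}"
  then obtain v J where "C = toR ` Zbox v J" by blast
  then have "C = {toR v + (\<chi> i. if i \<in> T then 1 else 0) | T. T \<subseteq> J}" by (simp add: std_box)
  moreover have "toR v \<in> Z3" unfolding Z3_eq by blast
  ultimately show "C \<in> std_cubes" unfolding std_cubes_def by blast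
qed

definition zf :: "(3 \<Rightarrow> int) \<Rightarrow> (3 \<Rightarrow> int) \<Rightarrow> 3 set \<Rightarrow> 3 \<Rightarrow> int" where
  "zf z \<kappa> T j = (if j \<in> T then (if \<kappa> j = z j then z j - 1 else z j + 1) else z j)"

lemma flip_Psi:
  assumes k: "\<forall>j\<in>T. \<kappa> j = z j \<or> \<kappa> j = z j + 1"
  shows "flip (Psi z) ((\<lambda>j. Wl j (\<kappa> j)) ` T) = Psi (zf z \<kappa> T)"
proof (rule sec_ext)
  fix w assume w: "w \<notin> walls tri_H"
  then have "w \<notin> (\<lambda>j. Wl j (\<kappa> j)) ` T" by auto
  then show "flip (Psi z) ((\<lambda>j. Wl j (\<kappa> j)) ` T) w = {}" using w by (simp add: flip_def Psi_nw)
next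
  fix w assume "w \<notin> walls tri_H" then show "Psi (zf z \<kappa> T) w = {}" by (rule Psi_nw)
next
  fix i k
  have mem: "Wl i k \<in> (\<lambda>j. Wl j (\<kappa> j)) ` T \<longleftrightarrow> i \<in> T \<and> k = \<kappa> i"
    by (auto simp: Wl_inj)
  show "flip (Psi z) ((\<lambda>j. Wl j (\<kappa> j)) ` T) (Wl i k) = Psi (zf z \<kappa> T) (Wl i k)"
  proof (cases "i \<in> T \<and> k = \<kappa> i")
    case True
    then have "\<kappa> i = z i \<or> \<kappa> i = z i + 1" using k by blast
    then have "(\<not> k \<le> z i) = (k \<le> zf z \<kappa> T i)" using True by (auto simp: zf_def)
    then show ?thesis using True mem by (simp add: flip_def HS_compl)
  next
    case False
    have nm: "Wl i k \<notin> (\<lambda>j. Wl j (\<kappa> j)) ` T" using False mem by blast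
    have eq: "(k \<le> z i) = (k \<le> zf z \<kappa> T i)"
    proof (cases "i \<in> T")
      case True
      then have "\<kappa> i = z i \<or> \<kappa> i = z i + 1" using k by blast
      then show ?thesis using True False by (auto simp: zf_def)
    qed (simp add: zf_def)
    show ?thesis using nm eq by (simp add: flip_def)
  qed
qed

lemma box_flip:
  assumes k: "\<forall>j\<in>J. \<kappa> j = z j \<or> \<kappa> j = z j + 1"
  shows "{flip (Psi z) T | T. T \<subseteq> (\<lambda>j. Wl j (\<kappa> j)) ` J}
       = Psi ` Zbox (\<lambda>j. if j \<in> J \<and> \<kappa> j = z j then z j - 1 else z j) J"
proof -
  let ?v = "\<lambda>j. if j \<in> J \<and> \<kappa> j = z j then z j - 1 else z j"
  have "{flip (Psi z) T | T. T \<subseteq> (\<lambda>j. Wl j (\<kappa> j)) ` J}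
      = (\<lambda>T'. flip (Psi z) ((\<lambda>j. Wl j (\<kappa> j)) ` T')) ` Pow J"
  proof (rule set_eqI)
    fix x
    show "x \<in> {flip (Psi z) T | T. T \<subseteq> (\<lambda>j. Wl j (\<kappa> j)) ` J} \<longleftrightarrow>
          x \<in> (\<lambda>T'. flip (Psi z) ((\<lambda>j. Wl j (\<kappa> j)) ` T')) ` Pow J"
      unfolding mem_Collect_eq image_iff Pow_iff subset_image_iff by blast
  qed
  also have "\<dots> = (\<lambda>T'. Psi (zf z \<kappa> T')) ` Pow J"
  proof (rule image_cong)
    fix T' assume "T' \<in> Pow J"
    then show "flip (Psi z) ((\<lambda>j. Wl j (\<kappa> j)) ` T') = Psi (zf z \<kappa> T')"
      using k by (intro flip_Psi) blast
  qed simp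
  also have "\<dots> = Psi ` {zf z \<kappa> T' | T'. T' \<subseteq> J}" by (auto simp: image_iff)
  also have "{zf z \<kappa> T' | T'. T' \<subseteq> J} = Zbox ?v J"
  proof (rule set_eqI, rule iffI)
    fix y assume "y \<in> {zf z \<kappa> T' | T'. T' \<subseteq> J}"
    then obtain T' where T': "T' \<subseteq> J" "y = zf z \<kappa> T'" by blast
    have "y i = ?v i \<or> (i \<in> J \<and> y i = ?v i + 1)" for i
    proof (cases "i \<in> J")
      case True
      then have "\<kappa> i = z i \<or> \<kappa> i = z i + 1" using k by blast
      then show ?thesis using T' True by (auto simp: zf_def)
    next
      case False
      then show ?thesis using T' by (auto simp: zf_def)
    qed
    then show "y \<in> Zbox ?v J" by (simp add: Zbox_def)
  next
    fix y assume y: "y \<in> Zbox ?v J"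
    let ?T = "{j \<in> J. y j \<noteq> z j}"
    have "y i = zf z \<kappa> ?T i" for i
    proof (cases "i \<in> J")
      case True
      then have "\<kappa> i = z i \<or> \<kappa> i = z i + 1" using k by blast
      moreover have "y i = ?v i \<or> y i = ?v i + 1" using y[unfolded Zbox_def mem_Collect_eq, rule_format, of i] by auto
      ultimately show ?thesis using True by (auto simp: zf_def)
    next
      case False
      then have "y i = ?v i" using y[unfolded Zbox_def mem_Collect_eq, rule_format, of i] by auto
      then show ?thesis using False by (simp add: zf_def)
    qed
    then have "y = zf z \<kappa> ?T" by blast
    then show "y \<in> {zf z \<kappa> T' | T'. T' \<subseteq> J}" by blast
  qed
  finally show ?thesis .
qed

lemma flip_one:
  assumes "flip (Psi z) {Wl j k} = Psi z1"
  shows "k = z j \<or> k = z j + 1"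
proof -
  have a: "(k \<le> z1 j) = (\<not> k \<le> z j)"
    using fun_cong[OF assms, of "Wl j k"] by (simp add: flip_def HS_compl HS_inj)
  have b: "(k' \<le> z1 j) = (k' \<le> z j)" if "k' \<noteq> k" for k'
    using fun_cong[OF assms, of "Wl j k'"] that by (simp add: flip_def HS_inj Wl_inj)
  show ?thesis
  proof (rule ccontr)
    assume n: "\<not> ?thesis"
    show False
    proof (cases "k \<le> z j")
      case True
      then show False using a b[of "z j"] n by auto
    next
      case False
      then show False using a b[of "z j + 1"] n by auto
    qed
  qed
qed

lemma inj_Psi: "inj Psi"
  by (rule injI) (simp add: Psi_inj)

lemma cubes_char: "S \<in> cc_cubes tri_H p \<longleftrightarrow> (\<exists>v J. S = Psi ` Zbox v J)"
proof
  assume "S \<in> cc_cubes tri_H p"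
  then obtain \<sigma> W0 where S: "S = {flip \<sigma> T | T. T \<subseteq> W0}" and
    sV: "\<sigma> \<in> cc_vertices tri_H p" and W0w: "W0 \<subseteq> walls tri_H" and
    cr: "\<forall>w\<in>W0. \<forall>k\<in>W0. w \<noteq> k \<longrightarrow> crosses w k" and
    fl: "\<forall>T. T \<subseteq> W0 \<longrightarrow> flip \<sigma> T \<in> cc_vertices tri_H p"
    unfolding cc_cubes_def by blast
  obtain z where z: "\<sigma> = Psi z" using sV unfolding V_eq by blast
  define J where "J = {j. \<exists>k. Wl j k \<in> W0}"
  define \<kappa> where "\<kappa> j = (THE k. Wl j k \<in> W0)" for j
  have uniq: "k = k'" if "Wl j k \<in> W0" "Wl j k' \<in> W0" for j k k'
  proof (rule ccontr)
    assume "k \<noteq> k'"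
    then have "Wl j k \<noteq> Wl j k'" by (simp add: Wl_inj)
    then have "crosses (Wl j k) (Wl j k')" using cr that by blast
    then show False by (simp add: crosses_Wl)
  qed
  have kap: "\<kappa> j = k" if "Wl j k \<in> W0" for j k
    unfolding \<kappa>_def using that uniq by (intro the_equality) auto
  have W0eq: "W0 = (\<lambda>j. Wl j (\<kappa> j)) ` J"
  proof
    show "W0 \<subseteq> (\<lambda>j. Wl j (\<kappa> j)) ` J"
    proof
      fix w assume w: "w \<in> W0"
      then have "w \<in> walls tri_H" using W0w by blast
      then obtain j k where "w = Wl j k" by (rule wallsE)
      then show "w \<in> (\<lambda>j. Wl j (\<kappa> j)) ` J" using w kap unfolding J_def by blast
    qed
  next
    show "(\<lambda>j. Wl j (\<kappa> j)) ` J \<subseteq> W0"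
    proof
      fix w assume "w \<in> (\<lambda>j. Wl j (\<kappa> j)) ` J"
      then obtain j where j: "j \<in> J" "w = Wl j (\<kappa> j)" by blast
      then obtain k where "Wl j k \<in> W0" unfolding J_def by blast
      then show "w \<in> W0" using j kap by metis
    qed
  qed
  have kk: "\<forall>j\<in>J. \<kappa> j = z j \<or> \<kappa> j = z j + 1"
  proof
    fix j assume "j \<in> J"
    then have "{Wl j (\<kappa> j)} \<subseteq> W0" using W0eq by blast
    then have "flip (Psi z) {Wl j (\<kappa> j)} \<in> range Psi" using fl z V_eq by metis
    then obtain z1 where "flip (Psi z) {Wl j (\<kappa> j)} = Psi z1" by blast
    then show "\<kappa> j = z j \<or> \<kappa> j = z j + 1" by (rule flip_one)
  qed
  have "S = Psi ` Zbox (\<lambda>j. if j \<in> J \<and> \<kappa> j = z j then z j - 1 else z j) J"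
    unfolding S z W0eq by (rule box_flip[OF kk])
  then show "\<exists>v J. S = Psi ` Zbox v J" by blast
next
  assume "\<exists>v J. S = Psi ` Zbox v J"
  then obtain v J where S: "S = Psi ` Zbox v J" by blast
  let ?W0 = "(\<lambda>j. Wl j (v j + 1)) ` J"
  have kk: "\<forall>j\<in>J. v j + 1 = v j \<or> v j + 1 = v j + 1" by simp
  have bx: "{flip (Psi v) T | T. T \<subseteq> ?W0} = Psi ` Zbox v J"
    using box_flip[OF kk] by simp
  have c1: "Psi v \<in> cc_vertices tri_H p" unfolding V_eq by blast
  have c2: "?W0 \<subseteq> walls tri_H" by auto
  have c3: "finite ?W0" by simp
  have c4: "\<forall>w\<in>?W0. \<forall>k\<in>?W0. w \<noteq> k \<longrightarrow> crosses w k"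
    by (auto simp: crosses_Wl)
  have c5: "\<forall>T. T \<subseteq> ?W0 \<longrightarrow> flip (Psi v) T \<in> cc_vertices tri_H p"
  proof (intro allI impI)
    fix T assume "T \<subseteq> ?W0"
    then have "flip (Psi v) T \<in> Psi ` Zbox v J" using bx by blast
    then show "flip (Psi v) T \<in> cc_vertices tri_H p" unfolding V_eq by blast
  qed
  have Seq: "S = {flip (Psi v) T | T. T \<subseteq> ?W0}" using bx S by simp
  show "S \<in> cc_cubes tri_H p"
    unfolding cc_cubes_def mem_Collect_eq
    apply (rule exI[of _ "Psi v"], rule exI[of _ ?W0])
    by (intro conjI Seq c1 c2 c3 c4 c5)
qed

lemma cube_thm:
  assumes "S \<subseteq> cc_vertices tri_H p"
  shows "S \<in> cc_cubes tri_H p \<longleftrightarrow> phi ` S \<in> std_cubes"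
proof -
  define ZS where "ZS = Psi -` S"
  have S: "S = Psi ` ZS" using assms unfolding ZS_def V_eq by auto
  have ph: "phi ` S = toR ` ZS" unfolding S image_image by simp
  have "S \<in> cc_cubes tri_H p \<longleftrightarrow> (\<exists>v J. ZS = Zbox v J)"
    unfolding cubes_char S by (simp add: inj_image_eq_iff[OF inj_Psi])
  also have "\<dots> \<longleftrightarrow> phi ` S \<in> std_cubes"
    unfolding std_cubes_eq ph by (auto simp: inj_image_eq_iff[OF inj_toR])
  finally show ?thesis .
qed


lemma F_eq2:
  assumes "a \<noteq> b" "F a x = F a y" "F b x = F b y" shows "x = y"
proof -
  have s: "F 1 x + F 2 x + F 3 x = F 1 y + F 2 y + F 3 y" using F_sum[of x] F_sum[of y] by simp
  have "a = 1 \<or> a = 2 \<or> a = 3" "b = 1 \<or> b = 2 \<or> b = 3" by (rule exhaust_3)+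
  then have "F 1 x = F 1 y \<and> F 3 x = F 3 y" using assms s by (elim disjE) auto
  then show ?thesis using F_eqI by blast
qed

definition valid :: "(real \<times> real \<Rightarrow> real \<times> real) \<Rightarrow> (3 \<Rightarrow> 3) \<Rightarrow> int \<Rightarrow> (3 \<Rightarrow> int) \<Rightarrow> bool" where
  "valid g \<rho> s d \<longleftrightarrow> bij \<rho> \<and> (s = 1 \<or> s = -1) \<and>
      (\<forall>i p. F (\<rho> i) (g p) = of_int s * F i p + of_int (d i))"

definition swp :: "3 \<Rightarrow> 3 \<Rightarrow> 3 \<Rightarrow> 3" where
  "swp a b i = (if i = a then b else if i = b then a else i)"

lemma bij_swp: "bij (swp a b)"
proof -
  have "swp a b \<circ> swp a b = id" by (auto simp: swp_def)
  then show ?thesis using o_bij by blast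
qed

lemma s3sq: "sqrt 3 * sqrt 3 = (3::real)" by simp

lemma gen_a: "valid (refl_line 0 0) (swp 2 3) (-1) (\<lambda>_. 0)"
proof -
  have "F (swp 2 3 i) (refl_line 0 0 p) = - F i p" for i p
  proof -
    have "i = 1 \<or> i = 2 \<or> i = 3" by (rule exhaust_3)
    then show ?thesis
      by (elim disjE) (simp_all add: swp_def refl_line_def dot2_def nrm_def F_def)
  qed
  then show ?thesis unfolding valid_def using bij_swp by simp
qed

lemma gen_b: "valid (refl_line 2 0) (swp 1 2) (-1) (\<lambda>_. 0)"
proof -
  have "F (swp 1 2 i) (refl_line 2 0 p) = - F i p" for i p
  proof -
    have "i = 1 \<or> i = 2 \<or> i = 3" by (rule exhaust_3)
    then show ?thesis
      by (elim disjE) (simp_all add: swp_def refl_line_def dot2_def nrm_def F_def field_simps)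
  qed
  then show ?thesis unfolding valid_def using bij_swp by simp
qed

definition dc :: "3 \<Rightarrow> int" where "dc i = (if i = 2 then -2 else 1)"

lemma gen_c: "valid (refl_line 1 1) (swp 1 3) (-1) dc"
proof -
  have "F (swp 1 3 i) (refl_line 1 1 p) = - F i p + of_int (dc i)" for i p
  proof -
    have "i = 1 \<or> i = 2 \<or> i = 3" by (rule exhaust_3)
    then show ?thesis
      by (elim disjE) (simp_all add: swp_def refl_line_def dot2_def nrm_def F_def dc_def field_simps)
  qed
  then show ?thesis unfolding valid_def using bij_swp by simp
qed

lemma valid_s: "valid g \<rho> s d \<Longrightarrow> of_int s * of_int s = (1::real)"
  unfolding valid_def by auto

lemma valid_comp:
  assumes "valid g \<rho> s d" "valid r \<rho>r sr dr"
  shows "valid (r \<circ> g) (\<rho>r \<circ> \<rho>) (sr * s) (\<lambda>i. sr * d i + dr (\<rho> i))"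
proof -
  have b: "bij (\<rho>r \<circ> \<rho>)" using assms unfolding valid_def by (auto intro: bij_comp)
  have s: "sr * s = 1 \<or> sr * s = -1" using assms unfolding valid_def by auto
  have "F ((\<rho>r \<circ> \<rho>) i) ((r \<circ> g) p) = of_int (sr * s) * F i p + of_int (sr * d i + dr (\<rho> i))" for i p
  proof -
    have h1: "F (\<rho>r (\<rho> i)) (r (g p)) = of_int sr * F (\<rho> i) (g p) + of_int (dr (\<rho> i))"
      using assms(2) unfolding valid_def by blast
    have h2: "F (\<rho> i) (g p) = of_int s * F i p + of_int (d i)"
      using assms(1) unfolding valid_def by blast
    show ?thesis by (simp add: h1 h2 algebra_simps)
  qed
  then show ?thesis using b s unfolding valid_def by blast
qed

lemma valid_id: "valid id id 1 (\<lambda>_. 0)"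
  unfolding valid_def by simp

lemma valid_Finv:
  assumes "valid g \<rho> s d"
  shows "F i p = of_int s * (F (\<rho> i) (g p) - of_int (d i))"
proof -
  have "F (\<rho> i) (g p) = of_int s * F i p + of_int (d i)" using assms unfolding valid_def by blast
  then have "of_int s * (F (\<rho> i) (g p) - of_int (d i)) = (of_int s * of_int s) * F i p" by (simp add: algebra_simps)
  then show ?thesis using valid_s[OF assms] by simp
qed

lemma valid_bij:
  assumes v: "valid g \<rho> s d" shows "bij g"
proof (rule bijI)
  show "inj g"
  proof (rule injI)
    fix x y assume "g x = g y"
    then have "F i x = F i y" for i using valid_Finv[OF v, of i x] valid_Finv[OF v, of i y] by simp
    then show "x = y" using F_eqI by blast
  qed
next
  show "surj g" unfolding surj_def
  proof
    fix q
    have "(1::3) \<noteq> 3" by simp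
    from F_pt2[OF this] obtain p where
      p: "F 1 p = of_int s * (F (\<rho> 1) q - of_int (d 1))" "F 3 p = of_int s * (F (\<rho> 3) q - of_int (d 3))"
      by blast
    have bj: "bij \<rho>" using v unfolding valid_def by blast
    have n13: "(1::3) \<noteq> 3" by simp
    have ne: "\<rho> 1 \<noteq> \<rho> 3" using bj n13 unfolding bij_def inj_def by metis
    have sn: "of_int s \<noteq> (0::real)" using valid_s[OF v] by auto
    have e1: "F (\<rho> 1) (g p) = F (\<rho> 1) q"
    proof -
      have "of_int s * (F (\<rho> 1) (g p) - of_int (d 1)) = of_int s * (F (\<rho> 1) q - of_int (d 1))"
        using valid_Finv[OF v, of 1 p] p(1) by metis
      then show ?thesis using sn by simp
    qed
    have e3: "F (\<rho> 3) (g p) = F (\<rho> 3) q"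
    proof -
      have "of_int s * (F (\<rho> 3) (g p) - of_int (d 3)) = of_int s * (F (\<rho> 3) q - of_int (d 3))"
        using valid_Finv[OF v, of 3 p] p(2) by metis
      then show ?thesis using sn by simp
    qed
    have "g p = q" using F_eq2[OF ne e1 e3] .
    then show "\<exists>x. q = g x" by metis

  qed
qed

lemma valid_dsum:
  assumes v: "valid g \<rho> s d" shows "d 1 + d 2 + d 3 = 0"
proof -
  have bj: "bij \<rho>" using v unfolding valid_def by blast
  define p :: "real \<times> real" where "p = (0, 0)"
  have "(\<Sum>i\<in>UNIV. F (\<rho> i) (g p)) = (\<Sum>j\<in>UNIV. F j (g p))"
    by (rule sum.reindex_bij_betw) (use bj in \<open>simp add: bij_betw_def bij_def\<close>)
  also have "\<dots> = 0" using F_sum[of "g p"] by (simp add: sum_3)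
  finally have "(\<Sum>i\<in>UNIV. of_int s * F i p + of_int (d i)) = (0::real)"
    using v unfolding valid_def by simp
  then have "of_int s * (F 1 p + F 2 p + F 3 p) + of_int (d 1 + d 2 + d 3) = (0::real)"
    by (simp add: sum_3 algebra_simps)
  then show ?thesis using F_sum[of p] by simp
qed

lemma tri_G_valid: "g \<in> tri_G \<Longrightarrow> \<exists>\<rho> s d. valid g \<rho> s d"
proof (induction rule: tri_G.induct)
  case tri_G_id then show ?case using valid_id by blast
next
  case (tri_G_step g r)
  then obtain \<rho> s d where v: "valid g \<rho> s d" by blast
  from tri_G_step.hyps(2) have "\<exists>\<rho>r sr dr. valid r \<rho>r sr dr"
    unfolding tri_gens_def using gen_a gen_b gen_c by blast
  then obtain \<rho>r sr dr where "valid r \<rho>r sr dr" by blast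
  from valid_comp[OF v this] show ?case by blast
qed

definition Op :: "3 \<Rightarrow> int \<Rightarrow> bool \<Rightarrow> (real \<times> real) set" where
  "Op i k b = (if b then {p. F i p > of_int k} else {p. F i p < of_int k})"

definition nv :: "3 \<Rightarrow> real \<times> real" where
  "nv i = (if i = 1 then (0, 2 / sqrt 3) else if i = 2 then (-1, - 1 / sqrt 3) else (1, - 1 / sqrt 3))"

lemma F_inner: "F i p = inner (nv i) p"
  by (cases p) (auto simp: F_def nv_def)

lemma nv_nz: "nv i \<noteq> 0"
  by (auto simp: nv_def zero_prod_def)

lemma interior_HS: "interior (HS i k b) = Op i k b"
proof -
  have o1: "open {p. F i p > of_int k}" for i unfolding F_inner by (rule open_halfspace_gt)
  have o2: "open {p. F i p < of_int k}" for i unfolding F_inner by (rule open_halfspace_lt)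
  have i1: "interior {p. F i p \<ge> of_int k} = {p. F i p > of_int k}" for i
    unfolding F_inner using nv_nz by simp
  have i2: "interior {p. F i p \<le> of_int k} = {p. F i p < of_int k}" for i
    unfolding F_inner using nv_nz by simp
  have c1: "- {p. F i p > of_int k} = {p. F i p \<le> of_int k}" for i by auto
  have c2: "- {p. F i p \<ge> of_int k} = {p. F i p < of_int k}" for i by auto
  show ?thesis
    by (cases b; cases "i = 2") (simp_all add: HS_def Hi_def Op_def o1 o2 i1 i2 interior_open c1 c2)
qed

lemma Op_sub: "Op i k b \<subseteq> HS i k b"
  by (auto simp: Op_def mem_HS)

lemma Op_disj: "Op j k b \<inter> HS j' k' b' = {} \<Longrightarrow>
   (j = j' \<and> ((b \<and> \<not> b' \<and> k' \<le> k) \<or> (\<not> b \<and> b' \<and> k \<le> k')))"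
proof (rule ccontr)
  assume e: "Op j k b \<inter> HS j' k' b' = {}"
  assume nc: "\<not> (j = j' \<and> ((b \<and> \<not> b' \<and> k' \<le> k) \<or> (\<not> b \<and> b' \<and> k \<le> k')))"
  show False
  proof (cases "j = j'")
    case False
    then obtain p where p: "F j p = val k b" "F j' p = val k' b'" using F_pt2 by blast
    then have "p \<in> HS j' k' b'" by (simp add: mem_HS_val)
    moreover have "p \<in> Op j k b" using p by (simp add: Op_def val_def)
    ultimately show False using e by blast
  next
    case True
    define v where "v = (if b = b' then (if b then max (of_int k) (of_int k') + 1 else min (of_int k) (of_int k') - 1)
               else (if b then of_int k + 1/2 else of_int k' + 1/2) :: real)"
    obtain p where p: "F j p = v" using F_pt1 by blast
    have "p \<in> Op j k b \<and> p \<in> HS j' k' b'" using p nc True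
      unfolding mem_HS v_def Op_def mem_Collect_eq
      by (cases b; cases b'; cases "j = 2"; simp; linarith)
    then show False using e by blast
  qed
qed

lemma int_HS_inj: "interior (HS j k b) = interior (HS j' k' b') \<Longrightarrow> j = j' \<and> k = k' \<and> b = b'"
proof -
  assume "interior (HS j k b) = interior (HS j' k' b')"
  then have e: "Op j k b = Op j' k' b'" by (simp add: interior_HS)
  have d1: "HS j k b \<inter> HS j k (\<not> b) = {}" by (simp add: HS_disj)
  have d2: "HS j' k' b' \<inter> HS j' k' (\<not> b') = {}" by (simp add: HS_disj)
  have "Op j' k' b' \<inter> HS j k (\<not> b) = {}" using d1 e Op_sub[of j k b] by blast
  then have a: "j' = j \<and> b = b' \<and> (if b then k \<le> k' else k' \<le> k)" by (auto dest: Op_disj)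
  have "Op j k b \<inter> HS j' k' (\<not> b') = {}" using d2 e Op_sub[of j' k' b'] by blast
  then have "j = j' \<and> (if b then k' \<le> k else k \<le> k')" using a by (auto dest: Op_disj)
  with a show "j = j' \<and> k = k' \<and> b = b'" by (auto split: if_splits)
qed

lemma img_F:
  assumes v: "valid g \<rho> s d"
  shows "g ` {p. \<Phi> (F i p)} = {q. \<Phi> (of_int s * (F (\<rho> i) q - of_int (d i)))}"
proof (rule set_eqI, rule iffI)
  fix q assume "q \<in> g ` {p. \<Phi> (F i p)}"
  then obtain p where "q = g p" "\<Phi> (F i p)" by blast
  then show "q \<in> {q. \<Phi> (of_int s * (F (\<rho> i) q - of_int (d i)))}" using valid_Finv[OF v, of i p] by simp
next
  fix q assume q: "q \<in> {q. \<Phi> (of_int s * (F (\<rho> i) q - of_int (d i)))}"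
  have "bij g" by (rule valid_bij[OF v])
  then obtain p where p: "q = g p" by (metis bij_pointE)
  then have "\<Phi> (F i p)" using q valid_Finv[OF v, of i p] by simp
  then show "q \<in> g ` {p. \<Phi> (F i p)}" using p by blast
qed

lemma img_Op:
  assumes v: "valid g \<rho> s d"
  shows "g ` Op i k b = Op (\<rho> i) (s * k + d i) (if s = 1 then b else \<not> b)"
proof -
  have s: "s = 1 \<or> s = -1" using v unfolding valid_def by blast
  show ?thesis
  proof (cases b)
    case True
    have "g ` Op i k b = {q. of_int k < of_int s * (F (\<rho> i) q - of_int (d i))}"
      using img_F[OF v, of "\<lambda>x. of_int k < x" i] True by (simp add: Op_def)
    then show ?thesis using s True by (auto simp: Op_def algebra_simps)
  next
    case False
    have "g ` Op i k b = {q. of_int s * (F (\<rho> i) q - of_int (d i)) < of_int k}"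
      using img_F[OF v, of "\<lambda>x. x < of_int k" i] False by (simp add: Op_def)
    then show ?thesis using s False by (auto simp: Op_def algebra_simps)
  qed
qed

lemma hs_img_HS:
  assumes v: "valid g \<rho> s d"
  shows "hs_img tri_H g (HS i k b) = HS (\<rho> i) (s * k + d i) (if s = 1 then b else \<not> b)"
  unfolding hs_img_def
proof (rule the_equality)
  show "HS (\<rho> i) (s * k + d i) (if s = 1 then b else \<not> b) \<in> tri_H \<and>
    interior (HS (\<rho> i) (s * k + d i) (if s = 1 then b else \<not> b)) = g ` interior (HS i k b)"
    by (auto simp: tri_H_eq interior_HS img_Op[OF v])
next
  fix h' assume h': "h' \<in> tri_H \<and> interior h' = g ` interior (HS i k b)"
  then obtain j k2 b2 where h: "h' = HS j k2 b2" unfolding tri_H_eq by blast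
  have "interior (HS j k2 b2) = interior (HS (\<rho> i) (s * k + d i) (if s = 1 then b else \<not> b))"
    using h' h by (simp add: interior_HS img_Op[OF v])
  then show "h' = HS (\<rho> i) (s * k + d i) (if s = 1 then b else \<not> b)"
    using h int_HS_inj by blast
qed

lemma valid_inv:
  assumes v: "valid g \<rho> s d"
  shows "valid (inv g) (inv \<rho>) s (\<lambda>j. - s * d (inv \<rho> j))"
proof -
  have bj: "bij \<rho>" and s: "s = 1 \<or> s = -1" using v unfolding valid_def by blast+
  have bg: "bij g" by (rule valid_bij[OF v])
  have "F (inv \<rho> j) (inv g q) = of_int s * F j q + of_int (- s * d (inv \<rho> j))" for j q
  proof -
    have "F (inv \<rho> j) (inv g q) = of_int s * (F (\<rho> (inv \<rho> j)) (g (inv g q)) - of_int (d (inv \<rho> j)))"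
      by (rule valid_Finv[OF v])
    also have "\<rho> (inv \<rho> j) = j" using bj by (simp add: bij_def surj_f_inv_f)
    also have "g (inv g q) = q" using bg by (simp add: bij_def surj_f_inv_f)
    finally show ?thesis by (simp add: algebra_simps)
  qed
  moreover have "bij (inv \<rho>)" using bj by (rule bij_imp_bij_inv)
  ultimately show ?thesis using s unfolding valid_def by blast
qed

lemma wall_img_Wl:
  assumes v: "valid g \<rho> s d"
  shows "wall_img tri_H (inv g) (Wl j k) = Wl (inv \<rho> j) (s * k + - s * d (inv \<rho> j))"
proof -
  have s: "s = 1 \<or> s = -1" using v unfolding valid_def by blast
  have h: "hs_img tri_H (inv g) (HS j k b) = HS (inv \<rho> j) (s * k + - s * d (inv \<rho> j)) (if s = 1 then b else \<not> b)" for b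
    using hs_img_HS[OF valid_inv[OF v], of j k b] by simp
  show ?thesis unfolding wall_img_def Wl_def using s by (auto simp: h)
qed

definition znew :: "(3 \<Rightarrow> 3) \<Rightarrow> int \<Rightarrow> (3 \<Rightarrow> int) \<Rightarrow> (3 \<Rightarrow> int) \<Rightarrow> 3 \<Rightarrow> int" where
  "znew \<rho> s d z j = s * z (inv \<rho> j) + d (inv \<rho> j) + (if s = 1 then 0 else -1)"

lemma sec_act_Psi:
  assumes v: "valid g \<rho> s d"
  shows "sec_act tri_H g (Psi z) = Psi (znew \<rho> s d z)"
proof (rule sec_ext)
  fix w assume "w \<notin> walls tri_H" then show "sec_act tri_H g (Psi z) w = {}" by (simp add: sec_act_def)
next
  fix w assume "w \<notin> walls tri_H" then show "Psi (znew \<rho> s d z) w = {}" by (rule Psi_nw)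
next
  fix j k
  have bj: "bij \<rho>" and s: "s = 1 \<or> s = -1" using v unfolding valid_def by blast+
  define i where "i = inv \<rho> j"
  have ri: "\<rho> i = j" unfolding i_def using bj by (simp add: bij_def surj_f_inv_f)
  define k2 where "k2 = s * k + - s * d i"
  have kk: "s * k2 + d i = k" unfolding k2_def using s by auto
  have "sec_act tri_H g (Psi z) (Wl j k) = hs_img tri_H g (Psi z (Wl i k2))"
    by (simp add: sec_act_def wall_img_Wl[OF v] i_def k2_def)
  also have "\<dots> = HS j k (if s = 1 then k2 \<le> z i else \<not> k2 \<le> z i)"
    by (simp add: hs_img_HS[OF v] ri kk)
  also have "(if s = 1 then k2 \<le> z i else \<not> k2 \<le> z i) = (k \<le> znew \<rho> s d z j)"
    unfolding znew_def i_def[symmetric] k2_def using s by auto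
  finally show "sec_act tri_H g (Psi z) (Wl j k) = Psi (znew \<rho> s d z) (Wl j k)" by simp
qed

lemma valid_uniq:
  assumes v: "valid g \<rho> s d" and v': "valid g \<rho>' s' d'"
  shows "\<rho> = \<rho>' \<and> s = s' \<and> d = d'"
proof -
  have bg: "bij g" by (rule valid_bij[OF v])
  have sn: "s \<noteq> 0" using v unfolding valid_def by auto
  have r: "\<rho> i = \<rho>' i" for i
  proof (rule ccontr)
    assume ne: "\<rho> i \<noteq> \<rho>' i"
    obtain q where q: "F (\<rho> i) q = of_int (d i)" "F (\<rho>' i) q = of_int (d' i) + 1"
      using F_pt2[OF ne] by blast
    obtain p where p: "q = g p" using bg by (metis bij_pointE)
    have "of_int s * F i p + of_int (d i) = of_int (d i)" using v q(1) p unfolding valid_def by metis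
    then have "F i p = 0" using sn by simp
    moreover have "F (\<rho>' i) q = of_int s' * F i p + of_int (d' i)" using v' p unfolding valid_def by metis
    ultimately show False using q(2) by simp
  qed
  then have rr: "\<rho> = \<rho>'" by blast
  have e: "of_int s * F i p + of_int (d i) = of_int s' * F i p + (of_int (d' i) :: real)" for i p
    using v v' rr unfolding valid_def by metis
  have dd: "d i = d' i" for i
  proof -
    obtain p where "F i p = 0" using F_pt1 by blast
    then show ?thesis using e[of i p] by simp
  qed
  have "s = s'"
  proof -
    obtain p where "F 1 p = 1" using F_pt1 by blast
    then show ?thesis using e[of 1 p] dd[of 1] by simp
  qed
  with rr dd show ?thesis by blast
qed

lemma valid_same:
  assumes v: "valid g \<rho> s d" and v': "valid g' \<rho> s d"
  shows "g = g'"
proof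
  fix p
  have bj: "bij \<rho>" using v unfolding valid_def by blast
  have "F (\<rho> i) (g p) = F (\<rho> i) (g' p)" for i using v v' unfolding valid_def by metis
  then have "F j (g p) = F j (g' p)" for j using bj by (metis bij_pointE)
  then show "g p = g' p" using F_eqI by blast
qed

definition dat :: "(real \<times> real \<Rightarrow> real \<times> real) \<Rightarrow> (3 \<Rightarrow> 3) \<times> int \<times> (3 \<Rightarrow> int)" where
  "dat g = (SOME x. valid g (fst x) (fst (snd x)) (snd (snd x)))"

lemma dat_valid:
  assumes "g \<in> tri_G" shows "valid g (fst (dat g)) (fst (snd (dat g))) (snd (snd (dat g)))"
proof -
  obtain \<rho> s d where "valid g \<rho> s d" using tri_G_valid[OF assms] by blast
  then have "\<exists>x. valid g (fst x) (fst (snd x)) (snd (snd x))" by (intro exI[of _ "(\<rho>, s, d)"]) simp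
  then show ?thesis unfolding dat_def by (rule someI_ex)
qed

lemma dat_eq:
  assumes "g \<in> tri_G" "valid g \<rho> s d" shows "dat g = (\<rho>, s, d)"
  using valid_uniq[OF dat_valid[OF assms(1)] assms(2)] by (simp add: prod_eq_iff)

definition AA :: "(3 \<Rightarrow> 3) \<Rightarrow> int \<Rightarrow> (3 \<Rightarrow> int) \<Rightarrow> real^3 \<Rightarrow> real^3" where
  "AA \<rho> s d x = (\<chi> j. of_int s * x $ (inv \<rho> j) + of_int (d (inv \<rho> j) + (if s = 1 then 0 else -1)))"

definition Aact :: "(real \<times> real \<Rightarrow> real \<times> real) \<Rightarrow> real^3 \<Rightarrow> real^3" where
  "Aact g = AA (fst (dat g)) (fst (snd (dat g))) (snd (snd (dat g)))"

lemma AA_toR: "AA \<rho> s d (toR z) = toR (znew \<rho> s d z)"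
  by (simp add: AA_def znew_def vec_eq_iff)

lemma equiv_Psi:
  assumes "g \<in> tri_G"
  shows "sec_act tri_H g (Psi z) \<in> range Psi \<and> Aact g (phi (Psi z)) = phi (sec_act tri_H g (Psi z))"
  using sec_act_Psi[OF dat_valid[OF assms]] by (simp add: Aact_def AA_toR)

lemma AA_dist:
  assumes bj: "bij \<rho>" and s: "s = 1 \<or> s = -1"
  shows "dist (AA \<rho> s d x) (AA \<rho> s d y) = dist x y"
proof -
  have bi: "bij (inv \<rho>)" using bj by (rule bij_imp_bij_inv)
  have abs_s: "\<bar>of_int s :: real\<bar> = 1" using s by auto
  have "AA \<rho> s d x - AA \<rho> s d y = (\<chi> j. of_int s * (x - y) $ (inv \<rho> j))"
    by (simp add: AA_def vec_eq_iff algebra_simps)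
  then have "dist (AA \<rho> s d x) (AA \<rho> s d y) = sqrt (\<Sum>j\<in>UNIV. (norm (of_int s * (x - y) $ (inv \<rho> j)))\<^sup>2)"
    by (simp add: dist_norm norm_vec_def L2_set_def)
  also have "(\<Sum>j\<in>UNIV. (norm (of_int s * (x - y) $ (inv \<rho> j)))\<^sup>2) = (\<Sum>j\<in>UNIV. (norm ((x - y) $ (inv \<rho> j)))\<^sup>2)"
    by (simp add: abs_mult abs_s)
  also have "\<dots> = (\<Sum>i\<in>UNIV. (norm ((x - y) $ i))\<^sup>2)"
    by (rule sum.reindex_bij_betw) (use bi in \<open>simp add: bij_betw_def bij_def\<close>)
  finally show ?thesis by (simp add: dist_norm norm_vec_def L2_set_def)
qed

lemma Aact_dist: "g \<in> tri_G \<Longrightarrow> dist (Aact g x) (Aact g y) = dist x y"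
  unfolding Aact_def using dat_valid unfolding valid_def by (blast intro: AA_dist)


lemma comp_bound:
  fixes K :: "(real^'n) set"
  assumes "compact K" obtains R where "\<And>x i. x \<in> K \<Longrightarrow> \<bar>x $ i\<bar> \<le> R"
proof -
  obtain R where R: "\<forall>x\<in>K. norm x \<le> R" using compact_imp_bounded[OF assms] unfolding bounded_iff by blast
  have "\<bar>x $ i\<bar> \<le> R" if "x \<in> K" for x i
    using component_le_norm_cart[of x i] R that by fastforce
  then show ?thesis using that by blast
qed

lemma AA_nth: "AA \<rho> s d x $ j = of_int s * x $ (inv \<rho> j) + of_int (d (inv \<rho> j) + (if s = 1 then 0 else -1))"
  by (simp add: AA_def)

lemma proper:
  assumes K: "compact K"
  shows "finite {g \<in> tri_G. Aact g ` K \<inter> K \<noteq> {}}"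
proof -
  obtain R where R: "\<And>x i. x \<in> K \<Longrightarrow> \<bar>x $ i\<bar> \<le> R" using comp_bound[OF K] by blast
  define B :: int where "B = \<lceil>2 * R + 1\<rceil>"
  define Ds where "Ds = {d :: 3 \<Rightarrow> int. \<forall>i. (i \<in> UNIV \<longrightarrow> d i \<in> {-B..B}) \<and> (i \<notin> UNIV \<longrightarrow> d i = 0)}"
  have fD: "finite Ds" unfolding Ds_def by (rule finite_set_of_finite_funs) simp_all
  define Fin where "Fin = (UNIV :: (3 \<Rightarrow> 3) set) \<times> ({1, -1 :: int} \<times> Ds)"
  have fF: "finite Fin" unfolding Fin_def using fD by simp
  define S where "S = {g \<in> tri_G. Aact g ` K \<inter> K \<noteq> {}}"
  have inj: "inj_on dat S"
  proof (rule inj_onI)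
    fix g g' assume g: "g \<in> S" "g' \<in> S" "dat g = dat g'"
    have v1: "valid g (fst (dat g)) (fst (snd (dat g))) (snd (snd (dat g)))"
      using g(1) dat_valid unfolding S_def by blast
    have v2': "valid g' (fst (dat g')) (fst (snd (dat g'))) (snd (snd (dat g')))"
      using g(2) dat_valid unfolding S_def by blast
    then have v2: "valid g' (fst (dat g)) (fst (snd (dat g))) (snd (snd (dat g)))"
      using g(3) by simp
    show "g = g'" by (rule valid_same[OF v1 v2])
  qed
  have sub: "dat ` S \<subseteq> Fin"
  proof
    fix D assume "D \<in> dat ` S"
    then obtain g where g: "g \<in> tri_G" "Aact g ` K \<inter> K \<noteq> {}" "D = dat g" unfolding S_def by blast
    obtain \<rho> s d where D: "dat g = (\<rho>, s, d)" by (metis prod.collapse)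
    have v: "valid g \<rho> s d" using dat_valid[OF g(1)] D by simp
    have bj: "bij \<rho>" and s: "s = 1 \<or> s = -1" using v unfolding valid_def by blast+
    obtain x where x: "x \<in> K" "Aact g x \<in> K" using g(2) by blast
    have "\<bar>d i\<bar> \<le> B" for i
    proof -
      have ii: "inv \<rho> (\<rho> i) = i" using bj by (simp add: bij_def)
      have "Aact g x $ (\<rho> i) = of_int s * x $ i + of_int (d i + (if s = 1 then 0 else -1))"
        by (simp add: Aact_def D AA_nth ii)
      moreover have "\<bar>Aact g x $ (\<rho> i)\<bar> \<le> R" "\<bar>x $ i\<bar> \<le> R" using R x by blast+
      ultimately have "\<bar>of_int (d i) :: real\<bar> \<le> 2 * R + 1" using s by (auto simp: abs_if split: if_splits)
      then have "of_int \<bar>d i\<bar> \<le> 2 * R + 1" by simp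
      then have "of_int \<bar>d i\<bar> \<le> (of_int \<lceil>2 * R + 1\<rceil> :: real)"
        using le_of_int_ceiling[of "2 * R + 1"] by linarith
      then show ?thesis unfolding B_def by (simp only: of_int_le_iff)
    qed
    then have "d i \<in> {-B..B}" for i by (simp add: abs_le_iff) (metis abs_le_iff minus_le_iff)
    then have "d \<in> Ds" unfolding Ds_def by simp
    then show "D \<in> Fin" using s g(3) D unfolding Fin_def by auto
  qed
  have "finite (dat ` S)" using finite_subset[OF sub fF] .
  then show ?thesis using finite_imageD[OF _ inj] unfolding S_def by blast
qed

lemma psum: "(x :: real^3) \<bullet> vector [1, 1, 1] = x $ 1 + x $ 2 + x $ 3"
  by (simp add: inner_vec_def sum_3)

lemma AA_sum:
  assumes bj: "bij \<rho>" and dz: "d 1 + d 2 + d 3 = 0"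
  shows "AA \<rho> s d x $ 1 + AA \<rho> s d x $ 2 + AA \<rho> s d x $ 3
         = of_int s * (x $ 1 + x $ 2 + x $ 3) + 3 * of_int (if s = 1 then 0 else -1 :: int)"
proof -
  have bi: "bij_betw (inv \<rho>) UNIV UNIV" using bij_imp_bij_inv[OF bj] by (simp add: bij_betw_def bij_def)
  have r1: "(\<Sum>j\<in>UNIV. x $ (inv \<rho> j)) = (\<Sum>i\<in>UNIV. x $ i)" by (rule sum.reindex_bij_betw[OF bi])
  have r2: "(\<Sum>j\<in>UNIV. of_int (d (inv \<rho> j)) :: real) = (\<Sum>i\<in>UNIV. of_int (d i))"
    by (rule sum.reindex_bij_betw[OF bi])
  have "(\<Sum>j\<in>UNIV. AA \<rho> s d x $ j) =
        (\<Sum>j\<in>UNIV. of_int s * x $ (inv \<rho> j) + of_int (d (inv \<rho> j)) + of_int (if s = 1 then 0 else -1 :: int))"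
    by (intro sum.cong refl) (simp add: AA_nth)
  also have "\<dots> = of_int s * (\<Sum>j\<in>UNIV. x $ (inv \<rho> j)) + (\<Sum>j\<in>UNIV. of_int (d (inv \<rho> j))) + 3 * of_int (if s = 1 then 0 else -1 :: int)"
    by (simp add: sum.distrib sum_distrib_left)
  also have "\<dots> = of_int s * (x $ 1 + x $ 2 + x $ 3) + 3 * of_int (if s = 1 then 0 else -1 :: int)"
    unfolding r1 r2 using dz by (simp add: sum_3 flip: of_int_add)
  finally show ?thesis by (simp add: sum_3)
qed

lemma Aact_sum:
  assumes "g \<in> tri_G"
  obtains s e where "s = 1 \<and> e = 0 \<or> s = -1 \<and> e = -1"
    "\<And>x. Aact g x $ 1 + Aact g x $ 2 + Aact g x $ 3 = s * (x $ 1 + x $ 2 + x $ 3) + 3 * e"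
proof -
  obtain \<rho> s d where D: "dat g = (\<rho>, s, d)" by (metis prod.collapse)
  have v: "valid g \<rho> s d" using dat_valid[OF assms] D by simp
  have bj: "bij \<rho>" and s: "s = 1 \<or> s = -1" using v unfolding valid_def by blast+
  have "Aact g x $ 1 + Aact g x $ 2 + Aact g x $ 3 = of_int s * (x $ 1 + x $ 2 + x $ 3) + 3 * of_int (if s = 1 then 0 else -1 :: int)" for x
    unfolding Aact_def D using AA_sum[OF bj valid_dsum[OF v]] by simp
  moreover have "(of_int s = (1::real) \<and> of_int (if s = 1 then 0 else -1 :: int) = (0::real)) \<or>
     (of_int s = (-1::real) \<and> of_int (if s = 1 then 0 else -1 :: int) = (-1::real))" using s by auto
  ultimately show ?thesis using that by blast
qed

lemma plane_inv:
  assumes g: "g \<in> tri_G"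
  shows "Aact g ` plane111 (-3/2) = plane111 (-3/2)"
proof -
  obtain \<rho> s d where D: "dat g = (\<rho>, s, d)" by (metis prod.collapse)
  have v: "valid g \<rho> s d" using dat_valid[OF g] D by simp
  have bj: "bij \<rho>" and s: "s = 1 \<or> s = -1" using v unfolding valid_def by blast+
  have sm: "AA \<rho> s d x $ 1 + AA \<rho> s d x $ 2 + AA \<rho> s d x $ 3
         = of_int s * (x $ 1 + x $ 2 + x $ 3) + 3 * of_int (if s = 1 then 0 else -1 :: int)" for x
    using AA_sum[OF bj valid_dsum[OF v]] .
  have A: "Aact g = AA \<rho> s d" unfolding Aact_def D by simp
  show ?thesis
  proof
    show "Aact g ` plane111 (-3/2) \<subseteq> plane111 (-3/2)"
      unfolding A plane111_def psum using sm s by auto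
  next
    show "plane111 (-3/2) \<subseteq> Aact g ` plane111 (-3/2)"
    proof
      fix y assume y: "y \<in> plane111 (-3/2)"
      define e :: int where "e = (if s = 1 then 0 else -1)"
      define x where "x = (\<chi> i. of_int s * (y $ (\<rho> i) - of_int (d i + e)))"
      have ri: "\<rho> (inv \<rho> j) = j" for j using bj by (simp add: bij_def surj_f_inv_f)
      have ss: "of_int s * of_int s = (1::real)" using s by auto
      have "AA \<rho> s d x $ j = y $ j" for j
      proof -
        have "AA \<rho> s d x $ j = (of_int s * of_int s) * (y $ j - of_int (d (inv \<rho> j) + e)) + of_int (d (inv \<rho> j) + e)"
          by (simp add: AA_nth x_def ri e_def)
        then show ?thesis using ss by simp
      qed
      then have ax: "AA \<rho> s d x = y" by (simp add: vec_eq_iff)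
      have "y $ 1 + y $ 2 + y $ 3 = -3/2" using y unfolding plane111_def psum by simp
      then have "of_int s * (x $ 1 + x $ 2 + x $ 3) + 3 * of_int e = -3/2" using sm[of x] ax e_def by simp
      then have "x $ 1 + x $ 2 + x $ 3 = -3/2" using s e_def by auto
      then have "x \<in> plane111 (-3/2)" unfolding plane111_def psum by simp
      then show "y \<in> Aact g ` plane111 (-3/2)" by (rule image_eqI[rotated]) (simp add: A ax)
    qed
  qed
qed

lemma tri_G_comp: "g \<in> tri_G \<Longrightarrow> h \<in> tri_G \<Longrightarrow> g \<circ> h \<in> tri_G"
proof (induction rule: tri_G.induct)
  case tri_G_id then show ?case by simp
next
  case (tri_G_step g r)
  have gh: "g \<circ> h \<in> tri_G" using tri_G_step.IH tri_G_step.prems by blast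
  have "r \<circ> (g \<circ> h) \<in> tri_G" by (rule tri_G.tri_G_step[OF gh tri_G_step.hyps(2)])
  then show ?case by (simp only: comp_assoc)
qed

lemma fun3_eq: "(f :: 3 \<Rightarrow> 'a) 1 = g 1 \<Longrightarrow> f 2 = g 2 \<Longrightarrow> f 3 = g 3 \<Longrightarrow> f = g"
  by (rule ext) (metis exhaust_3)

lemma valid_cong: "valid g \<rho> s d \<Longrightarrow> \<rho> = \<rho>' \<Longrightarrow> s = s' \<Longrightarrow> d = d' \<Longrightarrow> valid g \<rho>' s' d'"
  by simp

definition TS :: "(3 \<Rightarrow> int) set" where
  "TS = {d. \<exists>g\<in>tri_G. valid g id 1 d}"

lemma gens_in: "refl_line 0 0 \<in> tri_gens" "refl_line 2 0 \<in> tri_gens" "refl_line 1 1 \<in> tri_gens"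
  by (simp_all add: tri_gens_def)

definition e2 :: "3 \<Rightarrow> int" where "e2 i = (if i = 1 then 2 else -1)"

lemma TS_dc: "dc \<in> TS"
proof -
  let ?t = "refl_line 1 1 \<circ> (refl_line 0 0 \<circ> (refl_line 2 0 \<circ> (refl_line 0 0 \<circ> id)))"
  have m: "?t \<in> tri_G" by (intro tri_G.intros gens_in)
  note v = valid_comp[OF valid_comp[OF valid_comp[OF valid_comp[OF valid_id gen_a] gen_b] gen_a] gen_c]
  have "valid ?t id 1 dc"
    by (rule valid_cong[OF v]; (rule fun3_eq)?; simp add: swp_def dc_def)
  then show ?thesis using m unfolding TS_def by blast
qed

lemma TS_mdc: "(\<lambda>i. - dc i) \<in> TS"
proof -
  let ?t = "refl_line 0 0 \<circ> (refl_line 2 0 \<circ> (refl_line 0 0 \<circ> (refl_line 1 1 \<circ> id)))"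
  have m: "?t \<in> tri_G" by (intro tri_G.intros gens_in)
  note v = valid_comp[OF valid_comp[OF valid_comp[OF valid_comp[OF valid_id gen_c] gen_a] gen_b] gen_a]
  have "valid ?t id 1 (\<lambda>i. - dc i)"
    by (rule valid_cong[OF v]; (rule fun3_eq)?; simp add: swp_def dc_def)
  then show ?thesis using m unfolding TS_def by blast
qed

lemma TS_e2: "e2 \<in> TS"
proof -
  let ?t = "refl_line 2 0 \<circ> (refl_line 1 1 \<circ> (refl_line 2 0 \<circ> (refl_line 0 0 \<circ> id)))"
  have m: "?t \<in> tri_G" by (intro tri_G.intros gens_in)
  note v = valid_comp[OF valid_comp[OF valid_comp[OF valid_comp[OF valid_id gen_a] gen_b] gen_c] gen_b]
  have "valid ?t id 1 e2"
    by (rule valid_cong[OF v]; (rule fun3_eq)?; simp add: swp_def dc_def e2_def)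
  then show ?thesis using m unfolding TS_def by blast
qed

lemma TS_me2: "(\<lambda>i. - e2 i) \<in> TS"
proof -
  let ?t = "refl_line 0 0 \<circ> (refl_line 2 0 \<circ> (refl_line 1 1 \<circ> (refl_line 2 0 \<circ> id)))"
  have m: "?t \<in> tri_G" by (intro tri_G.intros gens_in)
  note v = valid_comp[OF valid_comp[OF valid_comp[OF valid_comp[OF valid_id gen_b] gen_c] gen_b] gen_a]
  have "valid ?t id 1 (\<lambda>i. - e2 i)"
    by (rule valid_cong[OF v]; (rule fun3_eq)?; simp add: swp_def dc_def e2_def)
  then show ?thesis using m unfolding TS_def by blast
qed

lemma TS_0: "(\<lambda>_. 0) \<in> TS"
  unfolding TS_def using valid_id tri_G.tri_G_id by blast

lemma TS_add: assumes "a \<in> TS" "b \<in> TS" shows "(\<lambda>i. a i + b i) \<in> TS"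
proof -
  obtain g where g: "g \<in> tri_G" "valid g id 1 a" using assms(1) unfolding TS_def by blast
  obtain h where h: "h \<in> tri_G" "valid h id 1 b" using assms(2) unfolding TS_def by blast
  have "valid (g \<circ> h) id 1 (\<lambda>i. a i + b i)"
    by (rule valid_cong[OF valid_comp[OF h(2) g(2)]]) (auto simp: add.commute)
  then show ?thesis using tri_G_comp[OF g(1) h(1)] unfolding TS_def by blast
qed

lemma TS_lin:
  assumes a: "a \<in> TS" and ma: "(\<lambda>i. - a i) \<in> TS"
  shows "(\<lambda>i. m * a i) \<in> TS"
proof (induction m rule: int_induct[where k = 0])
  case base then show ?case using TS_0 by simp
next
  case (step1 i)
  have "(\<lambda>j. i * a j + a j) \<in> TS" by (rule TS_add[OF step1.IH a])
  then show ?case by (simp add: algebra_simps)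
next
  case (step2 i)
  have "(\<lambda>j. i * a j + - a j) \<in> TS" by (rule TS_add[OF step2.IH ma])
  then show ?case by (simp add: algebra_simps)
qed

lemma cocompact:
  "\<exists>K. compact K \<and> K \<subseteq> plane111 (-3/2) \<and> (\<Union>g\<in>tri_G. Aact g ` K) = plane111 (-3/2)"
proof -
  define K0 where "K0 = plane111 (-3/2) \<inter> cbox (\<chi> _. (-10::real)) (\<chi> _. (10::real))"
  have cl: "closed (plane111 (-3/2))"
  proof -
    have "plane111 (-3/2) = {x. inner (vector [1,1,1]) x = (-3/2 :: real)}"
      unfolding plane111_def by (simp add: inner_commute)
    then show ?thesis using closed_hyperplane by metis
  qed
  have cK: "compact K0" unfolding K0_def by (rule closed_Int_compact[OF cl compact_cbox])
  have sK: "K0 \<subseteq> plane111 (-3/2)" unfolding K0_def by blast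
  have "(\<Union>g\<in>tri_G. Aact g ` K0) = plane111 (-3/2)"
  proof
    show "(\<Union>g\<in>tri_G. Aact g ` K0) \<subseteq> plane111 (-3/2)"
      using plane_inv sK by blast
  next
    show "plane111 (-3/2) \<subseteq> (\<Union>g\<in>tri_G. Aact g ` K0)"
    proof
      fix y assume y: "y \<in> plane111 (-3/2)"
      then have ys: "y $ 1 + y $ 2 + y $ 3 = -3/2" unfolding plane111_def psum by simp
      define n where "n = \<lfloor>(y $ 1 - y $ 3) / 3\<rfloor>"
      define m where "m = \<lfloor>y $ 3 + of_int n\<rfloor>"
      have n1: "of_int n \<le> (y $ 1 - y $ 3) / 3" "(y $ 1 - y $ 3) / 3 < of_int n + 1"
        unfolding n_def using floor_correct[of "(y $ 1 - y $ 3) / 3"] by simp_all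
      have m1: "of_int m \<le> y $ 3 + of_int n" "y $ 3 + of_int n < of_int m + 1"
        unfolding m_def using floor_correct[of "y $ 3 + of_int n"] by simp_all
      define t where "t = (\<lambda>i. m * dc i + n * e2 i)"
      have tT: "t \<in> TS" unfolding t_def
        by (rule TS_add[OF TS_lin[OF TS_dc TS_mdc] TS_lin[OF TS_e2 TS_me2]])
      then obtain g where g: "g \<in> tri_G" "valid g id 1 t" unfolding TS_def by blast
      have A: "Aact g = AA id 1 t" unfolding Aact_def using dat_eq[OF g] by simp
      define k where "k = y - toR t"
      have Ak: "Aact g k = y" unfolding A k_def by (simp add: AA_def vec_eq_iff)
      have t1: "t 1 = m + 2 * n" "t 2 = - 2 * m - n" "t 3 = m - n"
        by (simp_all add: t_def dc_def e2_def)
      have k1: "k $ 1 = y $ 1 - of_int m - 2 * of_int n" "k $ 2 = y $ 2 + 2 * of_int m + of_int n"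
        "k $ 3 = y $ 3 - of_int m + of_int n"
        by (simp_all add: k_def t1)
      have ks: "k $ 1 + k $ 2 + k $ 3 = -3/2" using ys k1 by linarith
      have kb: "\<bar>k $ j\<bar> \<le> 10" for j
      proof -
        have "j = 1 \<or> j = 2 \<or> j = 3" by (rule exhaust_3)
        moreover have "\<bar>k $ 1\<bar> \<le> 10" "\<bar>k $ 2\<bar> \<le> 10" "\<bar>k $ 3\<bar> \<le> 10"
          using k1 n1 m1 ys by (simp_all add: abs_le_iff)
        ultimately show ?thesis by blast
      qed
      have kb2: "-10 \<le> k $ j \<and> k $ j \<le> 10" for j using kb[of j] by (simp add: abs_le_iff)
      have "k \<in> K0" unfolding K0_def plane111_def psum
        using ks kb2 by (simp add: mem_box_cart)
      then show "y \<in> (\<Union>g\<in>tri_G. Aact g ` K0)" using g(1) Ak by (metis UN_iff image_eqI)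
    qed
  qed
  then show ?thesis using cK sK by blast
qed

lemma not_cocompact: "\<not> (\<exists>K. compact K \<and> (\<Union>g\<in>tri_G. Aact g ` K) = UNIV)"
proof
  assume "\<exists>K. compact K \<and> (\<Union>g\<in>tri_G. Aact g ` K) = UNIV"
  then obtain K where K: "compact K" "(\<Union>g\<in>tri_G. Aact g ` K) = UNIV" by blast
  obtain R where R: "\<And>x i. x \<in> K \<Longrightarrow> \<bar>x $ i\<bar> \<le> R" using comp_bound[OF K(1)] by blast
  define y :: "real^3" where "y = (\<chi> _. 3 * \<bar>R\<bar> + 10)"
  have "y \<in> (\<Union>g\<in>tri_G. Aact g ` K)" using K(2) by simp
  then obtain g x where gx: "g \<in> tri_G" "x \<in> K" "y = Aact g x" by blast
  obtain s e where se: "s = 1 \<and> e = 0 \<or> s = -1 \<and> e = -1"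
    and sm: "\<And>x. Aact g x $ 1 + Aact g x $ 2 + Aact g x $ 3 = s * (x $ 1 + x $ 2 + x $ 3) + 3 * e"
    using Aact_sum[OF gx(1)] by blast
  have "y $ 1 + y $ 2 + y $ 3 = s * (x $ 1 + x $ 2 + x $ 3) + 3 * e" using sm gx(3) by simp
  moreover have "y $ 1 + y $ 2 + y $ 3 = 9 * \<bar>R\<bar> + 30" by (simp add: y_def)
  moreover have "\<bar>x $ 1\<bar> \<le> R" "\<bar>x $ 2\<bar> \<le> R" "\<bar>x $ 3\<bar> \<le> R" using R gx(2) by blast+
  ultimately show False using se by (auto simp: abs_le_iff)
qed

theorem mainTheorem10:
  fixes p :: "real \<times> real"
  shows "\<exists>(\<phi> :: ((real \<times> real) set set \<Rightarrow> (real \<times> real) set) \<Rightarrow> real^3)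
           (A :: (real \<times> real \<Rightarrow> real \<times> real) \<Rightarrow> real^3 \<Rightarrow> real^3).
     bij_betw \<phi> (cc_vertices tri_H p) Z3 \<and>
     (\<forall>S. S \<subseteq> cc_vertices tri_H p \<longrightarrow> (S \<in> cc_cubes tri_H p \<longleftrightarrow> \<phi> ` S \<in> std_cubes)) \<and>
     (\<forall>g\<in>tri_G.
        (\<forall>\<sigma>\<in>cc_vertices tri_H p. sec_act tri_H g \<sigma> \<in> cc_vertices tri_H p) \<and>
        (\<forall>x y. dist (A g x) (A g y) = dist x y) \<and>
        (\<forall>\<sigma>\<in>cc_vertices tri_H p. A g (\<phi> \<sigma>) = \<phi> (sec_act tri_H g \<sigma>))) \<and>
     (\<forall>K. compact K \<longrightarrow> finite {g\<in>tri_G. A g ` K \<inter> K \<noteq> {}}) \<and>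
     (\<exists>c. (\<forall>g\<in>tri_G. A g ` plane111 c = plane111 c) \<and>
          (\<exists>K. compact K \<and> K \<subseteq> plane111 c \<and> (\<Union>g\<in>tri_G. A g ` K) = plane111 c)) \<and>
     \<not> (\<exists>K. compact K \<and> (\<Union>g\<in>tri_G. A g ` K) = UNIV)"
proof (intro exI[of _ phi] exI[of _ Aact] conjI)
  show "bij_betw phi (cc_vertices tri_H p) Z3" unfolding V_eq by (rule phi_bij)
  show "\<forall>S. S \<subseteq> cc_vertices tri_H p \<longrightarrow> (S \<in> cc_cubes tri_H p \<longleftrightarrow> phi ` S \<in> std_cubes)"
    using cube_thm by blast
  show "\<forall>g\<in>tri_G.
        (\<forall>\<sigma>\<in>cc_vertices tri_H p. sec_act tri_H g \<sigma> \<in> cc_vertices tri_H p) \<and>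
        (\<forall>x y. dist (Aact g x) (Aact g y) = dist x y) \<and>
        (\<forall>\<sigma>\<in>cc_vertices tri_H p. Aact g (phi \<sigma>) = phi (sec_act tri_H g \<sigma>))"
  proof
    fix g assume g: "g \<in> tri_G"
    have a: "\<forall>\<sigma>\<in>cc_vertices tri_H p. sec_act tri_H g \<sigma> \<in> cc_vertices tri_H p"
      unfolding V_eq using equiv_Psi[OF g] by blast
    have b: "\<forall>x y. dist (Aact g x) (Aact g y) = dist x y" using Aact_dist[OF g] by blast
    have c: "\<forall>\<sigma>\<in>cc_vertices tri_H p. Aact g (phi \<sigma>) = phi (sec_act tri_H g \<sigma>)"
      unfolding V_eq using equiv_Psi[OF g] by blast
    show "(\<forall>\<sigma>\<in>cc_vertices tri_H p. sec_act tri_H g \<sigma> \<in> cc_vertices tri_H p) \<and>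
        (\<forall>x y. dist (Aact g x) (Aact g y) = dist x y) \<and>
        (\<forall>\<sigma>\<in>cc_vertices tri_H p. Aact g (phi \<sigma>) = phi (sec_act tri_H g \<sigma>))"
      using a b c by blast
  qed
  show "\<forall>K. compact K \<longrightarrow> finite {g\<in>tri_G. Aact g ` K \<inter> K \<noteq> {}}" using proper by blast
  show "\<exists>c. (\<forall>g\<in>tri_G. Aact g ` plane111 c = plane111 c) \<and>
          (\<exists>K. compact K \<and> K \<subseteq> plane111 c \<and> (\<Union>g\<in>tri_G. Aact g ` K) = plane111 c)"
    using plane_inv cocompact by blast
  show "\<not> (\<exists>K. compact K \<and> (\<Union>g\<in>tri_G. Aact g ` K) = UNIV)" by (rule not_cocompact)
qed

end
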